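(* Every countable group $G$ admits a free action on $L_1[0,1]$ by lattice (positive) linear isometries for which there exists an equivalent $G$-invariant strictly convex norm on $L_1[0,1]$.
   Context: $\lambda$ is Lebesgue measure on $[0,1]$. Every lattice linear isometry of $L_1[0,1]$ is of the form $T_\phi(f)(x)=\frac{d\phi_*\lambda}{d\lambda}(x)\,f(\phi^{-1}(x))$ for a unique (mod null sets) measurable bijection $\phi$ of $[0,1]$ preserving the measure class of $\lambda$, so an action of $G$ by lattice isometries induces an action of $G$ on $[0,1]$ by such bijections; the action is called free if this induced action is (essentially) free, i.e. for each $g\neq 1_G$ the set of points fixed by $g$ is null. A norm is $G$-invariant if each $g$ acts isometrically for it; strictly convex if for $f\neq h$ of equal norm, $\|\frac{f+h}{2}\|<\|f\|$. *)

theory Defs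
  imports "HOL-Probability.Probability" "HOL-Algebra.Group"
begin

text \<open>Lebesgue measure on [0,1]; L_1[0,1] is represented by the integrable real functions,
  with all notions taken modulo equality almost everywhere.\<close>

abbreviation lam :: "real measure" where
  "lam \<equiv> lebesgue_on {0..1}"

definition L1 :: "(real \<Rightarrow> real) set" where
  "L1 = {f. integrable lam f}"

definition l1norm :: "(real \<Rightarrow> real) \<Rightarrow> real" where
  "l1norm f = (LINT x|lam. \<bar>f x\<bar>)"

definition aeq :: "(real \<Rightarrow> real) \<Rightarrow> (real \<Rightarrow> real) \<Rightarrow> bool" where
  "aeq f g \<longleftrightarrow> (AE x in lam. f x = g x)"

definition lattice_isometry :: "((real \<Rightarrow> real) \<Rightarrow> (real \<Rightarrow> real)) \<Rightarrow> bool" where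
  "lattice_isometry T \<longleftrightarrow>
     (\<forall>f\<in>L1. T f \<in> L1) \<and>
     (\<forall>f\<in>L1. \<forall>h\<in>L1. aeq f h \<longrightarrow> aeq (T f) (T h)) \<and>
     (\<forall>f\<in>L1. \<forall>h\<in>L1. \<forall>a b::real. aeq (T (\<lambda>x. a * f x + b * h x)) (\<lambda>x. a * T f x + b * T h x)) \<and>
     (\<forall>f\<in>L1. l1norm (T f) = l1norm f) \<and>
     (\<forall>f\<in>L1. aeq (T (\<lambda>x. \<bar>f x\<bar>)) (\<lambda>x. \<bar>T f x\<bar>)) \<and>
     (\<forall>f\<in>L1. \<exists>h\<in>L1. aeq (T h) f)"

definition nonsingular_bij :: "(real \<Rightarrow> real) \<Rightarrow> bool" where
  "nonsingular_bij \<phi> \<longleftrightarrow>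
     bij_betw \<phi> {0..1} {0..1} \<and> \<phi> \<in> lam \<rightarrow>\<^sub>M lam \<and> inv_into {0..1} \<phi> \<in> lam \<rightarrow>\<^sub>M lam \<and>
     absolutely_continuous lam (distr lam lam \<phi>) \<and> absolutely_continuous (distr lam lam \<phi>) lam"

definition Tphi :: "(real \<Rightarrow> real) \<Rightarrow> (real \<Rightarrow> real) \<Rightarrow> (real \<Rightarrow> real)" where
  "Tphi \<phi> f = (\<lambda>x. enn2real (RN_deriv lam (distr lam lam \<phi>) x) * f (inv_into {0..1} \<phi> x))"

definition lattice_isometric_action ::
  "('g, 'b) monoid_scheme \<Rightarrow> ('g \<Rightarrow> (real \<Rightarrow> real) \<Rightarrow> (real \<Rightarrow> real)) \<Rightarrow> bool" where
  "lattice_isometric_action G T \<longleftrightarrow>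
     (\<forall>g\<in>carrier G. lattice_isometry (T g)) \<and>
     (\<forall>f\<in>L1. aeq (T \<one>\<^bsub>G\<^esub> f) f) \<and>
     (\<forall>g\<in>carrier G. \<forall>h\<in>carrier G. \<forall>f\<in>L1. aeq (T (g \<otimes>\<^bsub>G\<^esub> h) f) (T g (T h f)))"

definition free_action ::
  "('g, 'b) monoid_scheme \<Rightarrow> ('g \<Rightarrow> (real \<Rightarrow> real) \<Rightarrow> (real \<Rightarrow> real)) \<Rightarrow> bool" where
  "free_action G T \<longleftrightarrow>
     (\<exists>\<phi>::'g \<Rightarrow> real \<Rightarrow> real.
        (\<forall>g\<in>carrier G. nonsingular_bij (\<phi> g) \<and> (\<forall>f\<in>L1. aeq (T g f) (Tphi (\<phi> g) f))) \<and>
        (\<forall>g\<in>carrier G. g \<noteq> \<one>\<^bsub>G\<^esub> \<longrightarrow> (AE x in lam. \<phi> g x \<noteq> x)))"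

definition equiv_norm :: "((real \<Rightarrow> real) \<Rightarrow> real) \<Rightarrow> bool" where
  "equiv_norm N \<longleftrightarrow>
     (\<forall>f\<in>L1. \<forall>h\<in>L1. aeq f h \<longrightarrow> N f = N h) \<and>
     (\<forall>f\<in>L1. 0 \<le> N f) \<and>
     (\<forall>f\<in>L1. N f = 0 \<longleftrightarrow> aeq f (\<lambda>_. 0)) \<and>
     (\<forall>f\<in>L1. \<forall>c::real. N (\<lambda>x. c * f x) = \<bar>c\<bar> * N f) \<and>
     (\<forall>f\<in>L1. \<forall>h\<in>L1. N (\<lambda>x. f x + h x) \<le> N f + N h) \<and>
     (\<exists>a b::real. 0 < a \<and> 0 < b \<and> (\<forall>f\<in>L1. a * l1norm f \<le> N f \<and> N f \<le> b * l1norm f))"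

definition strictly_convex_norm :: "((real \<Rightarrow> real) \<Rightarrow> real) \<Rightarrow> bool" where
  "strictly_convex_norm N \<longleftrightarrow>
     (\<forall>f\<in>L1. \<forall>h\<in>L1. \<not> aeq f h \<and> N f = N h \<longrightarrow> N (\<lambda>x. (f x + h x) / 2) < N f)"

definition invariant_norm ::
  "('g, 'b) monoid_scheme \<Rightarrow> ('g \<Rightarrow> (real \<Rightarrow> real) \<Rightarrow> (real \<Rightarrow> real)) \<Rightarrow> ((real \<Rightarrow> real) \<Rightarrow> real) \<Rightarrow> bool" where
  "invariant_norm G T N \<longleftrightarrow> (\<forall>g\<in>carrier G. \<forall>f\<in>L1. N (T g f) = N f)"

end

theory Submission
  imports Defs
begin



lemma aff_meas:
  fixes c t :: real assumes "c \<noteq> 0"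
  shows "(\<lambda>x. t + c * x) \<in> lebesgue \<rightarrow>\<^sub>M lebesgue"
  using lebesgue_affine_measurable[where c="\<lambda>_. c" and t=t] assms by simp

lemma aff_sets:
  fixes c t :: real assumes "c \<noteq> 0" "A \<in> sets lebesgue"
  shows "(\<lambda>x. t + c * x) -` A \<in> sets lebesgue"
  using measurable_sets[OF aff_meas[OF assms(1)] assms(2)] by simp

lemma aff_emeasure:
  fixes c t :: real assumes "c \<noteq> 0" "A \<in> sets lebesgue"
  shows "emeasure lebesgue A = ennreal \<bar>c\<bar> * emeasure lebesgue ((\<lambda>x. t + c * x) -` A)"
proof -
  have "emeasure lebesgue A = emeasure (density (distr lebesgue lebesgue (\<lambda>x. t + c * x)) (\<lambda>_. ennreal \<bar>c\<bar>)) A"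
    by (rule arg_cong[where f="\<lambda>M. emeasure M A", OF lebesgue_real_affine[OF assms(1), of t]])
  also have "\<dots> = ennreal \<bar>c\<bar> * emeasure (distr lebesgue lebesgue (\<lambda>x. t + c * x)) A"
    using assms by (subst emeasure_density_const) auto
  also have "\<dots> = ennreal \<bar>c\<bar> * emeasure lebesgue ((\<lambda>x. t + c * x) -` A)"
    using assms by (subst emeasure_distr[OF aff_meas]) auto
  finally show ?thesis .
qed

lemma ennreal_abs_mult_0: fixes c :: real and m :: ennreal assumes "c \<noteq> 0" "ennreal \<bar>c\<bar> * m = 0" shows "m = 0"
proof -
  have "ennreal \<bar>c\<bar> \<noteq> 0" using assms(1) by simp
  then show ?thesis using assms(2) by (simp only: mult_eq_0_iff) simp
qed

lemma aff_null:
  fixes c t :: real assumes "c \<noteq> 0" "A \<in> null_sets lebesgue"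
  shows "(\<lambda>x. t + c * x) -` A \<in> null_sets lebesgue"
proof -
  have A: "A \<in> sets lebesgue" using assms(2) by (rule null_setsD2)
  have A0: "emeasure lebesgue A = 0" using assms(2) by (rule null_setsD1)
  have "ennreal \<bar>c\<bar> * emeasure lebesgue ((\<lambda>x. t + c * x) -` A) = 0"
    using aff_emeasure[OF assms(1) A, of t] A0 by (rule subst)
  then have "emeasure lebesgue ((\<lambda>x. t + c * x) -` A) = 0"
    by (rule ennreal_abs_mult_0[OF assms(1)])
  then show ?thesis using aff_sets[OF assms(1) A] by (rule_tac null_setsI)
qed

lemma aff_image_eq:
  fixes c t :: real assumes "c \<noteq> 0"
  shows "(\<lambda>x. t + c * x) ` A = (\<lambda>y. (- t / c) + (1/c) * y) -` A"
proof -
  have 1: "(- t / c) + (1/c) * (t + c * x) = x" for x using assms by (simp add: field_simps)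
  have 2: "t + c * ((- t / c) + (1/c) * y) = y" for y using assms by (simp add: field_simps)
  show ?thesis
  proof (rule Set.set_eqI)
    fix z show "z \<in> (\<lambda>x. t + c * x) ` A \<longleftrightarrow> z \<in> (\<lambda>y. (- t / c) + (1/c) * y) -` A"
    proof
      assume "z \<in> (\<lambda>x. t + c * x) ` A"
      then obtain x where x: "x \<in> A" "z = t + c * x" by blast
      then show "z \<in> (\<lambda>y. (- t / c) + (1/c) * y) -` A" using 1[of x] by simp
    next
      assume "z \<in> (\<lambda>y. (- t / c) + (1/c) * y) -` A"
      then have "(- t / c) + (1/c) * z \<in> A" by simp
      then show "z \<in> (\<lambda>x. t + c * x) ` A" using 2[of z] by (metis image_eqI)
    qed
  qed
qed

lemma aff_image_null:
  fixes c t :: real assumes "c \<noteq> 0" "A \<in> null_sets lebesgue"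
  shows "(\<lambda>x. t + c * x) ` A \<in> null_sets lebesgue"
  using aff_null[of "1/c" A "- t / c"] assms aff_image_eq[OF assms(1)] by simp

lemma aff_image_sets:
  fixes c t :: real assumes "c \<noteq> 0" "A \<in> sets lebesgue"
  shows "(\<lambda>x. t + c * x) ` A \<in> sets lebesgue"
  using aff_sets[of "1/c" A "- t / c"] assms aff_image_eq[OF assms(1)] by simp



lemma aff_integral:
  fixes c t :: real and h :: "real \<Rightarrow> real"
  assumes "c \<noteq> 0" and h[measurable]: "h \<in> borel_measurable lebesgue"
  shows "integrable lebesgue h \<longleftrightarrow> integrable lebesgue (\<lambda>x. h (t + c * x))"
    and "integral\<^sup>L lebesgue h = \<bar>c\<bar> * integral\<^sup>L lebesgue (\<lambda>x. h (t + c * x))"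
proof -
  note L = lebesgue_real_affine[OF assms(1), of t]
  note M[measurable] = aff_meas[OF assms(1), of t]
  have "integrable lebesgue h \<longleftrightarrow> integrable (density (distr lebesgue lebesgue (\<lambda>x. t + c * x)) (\<lambda>_. ennreal \<bar>c\<bar>)) h"
    by (rule arg_cong[where f="\<lambda>M. integrable M h", OF L])
  also have "\<dots> \<longleftrightarrow> integrable (distr lebesgue lebesgue (\<lambda>x. t + c * x)) (\<lambda>x. \<bar>c\<bar> *\<^sub>R h x)"
    by (subst integrable_density) auto
  also have "\<dots> \<longleftrightarrow> integrable (distr lebesgue lebesgue (\<lambda>x. t + c * x)) h"
    unfolding real_scaleR_def integrable_mult_left_iff using assms(1) by simp
  also have "\<dots> \<longleftrightarrow> integrable lebesgue (\<lambda>x. h (t + c * x))"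
    by (subst integrable_distr_eq) auto
  finally show "integrable lebesgue h \<longleftrightarrow> integrable lebesgue (\<lambda>x. h (t + c * x))" .
  have "integral\<^sup>L lebesgue h = integral\<^sup>L (density (distr lebesgue lebesgue (\<lambda>x. t + c * x)) (\<lambda>_. ennreal \<bar>c\<bar>)) h"
    by (rule arg_cong[where f="\<lambda>M. integral\<^sup>L M h", OF L])
  also have "\<dots> = integral\<^sup>L (distr lebesgue lebesgue (\<lambda>x. t + c * x)) (\<lambda>x. \<bar>c\<bar> *\<^sub>R h x)"
    by (subst integral_density) auto
  also have "\<dots> = \<bar>c\<bar> * integral\<^sup>L (distr lebesgue lebesgue (\<lambda>x. t + c * x)) h"
    by simp
  also have "\<dots> = \<bar>c\<bar> * integral\<^sup>L lebesgue (\<lambda>x. h (t + c * x))"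
    by (subst integral_distr) auto
  finally show "integral\<^sup>L lebesgue h = \<bar>c\<bar> * integral\<^sup>L lebesgue (\<lambda>x. h (t + c * x))" .
qed



definition aa :: "nat \<Rightarrow> real" where "aa n = 1 - (1/2)^n"
definition LL :: "nat \<Rightarrow> real" where "LL n = (1/2)^(Suc n)"
definition emb :: "nat \<Rightarrow> real \<Rightarrow> real" where "emb n t = aa n + LL n * t"
definition idx :: "real \<Rightarrow> nat" where "idx x = (LEAST n. x < aa (Suc n))"
definition pos :: "real \<Rightarrow> real" where "pos x = (x - aa (idx x)) / LL (idx x)"

lemma LL_pos: "0 < LL n" by (simp add: LL_def)
lemma aa_Suc: "aa (Suc n) = aa n + LL n" by (simp add: aa_def LL_def)
lemma aa_0: "aa 0 = 0" by (simp add: aa_def)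
lemma aa_nonneg: "0 \<le> aa n" by (simp add: aa_def power_le_one)
lemma aa_less1: "aa n < 1" by (simp add: aa_def)
lemma aa_mono: "m \<le> n \<Longrightarrow> aa m \<le> aa n" by (simp add: aa_def power_decreasing)
lemma emb_eq: "emb n = (\<lambda>x. aa n + LL n * x)" by (rule ext) (simp add: emb_def)

lemma emb_block: "0 \<le> t \<Longrightarrow> t \<le> 1 \<Longrightarrow> aa n \<le> emb n t \<and> emb n t \<le> aa (Suc n)"
  using LL_pos[of n] by (auto simp: emb_def aa_Suc mult_le_cancel_left1)

lemma emb_lt: "t < 1 \<Longrightarrow> emb n t < aa (Suc n)"
  using LL_pos[of n] by (simp add: emb_def aa_Suc)

lemma emb_range: "t \<in> {0..1} \<Longrightarrow> emb n t \<in> {0..1}"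
  using emb_block[of t n] aa_nonneg[of n] aa_less1[of "Suc n"] by auto

lemma idx_ex: "x < 1 \<Longrightarrow> \<exists>n. x < aa (Suc n)"
proof -
  assume "x < 1"
  then obtain n where "(1/2::real)^n < 1 - x" using real_arch_pow_inv[of "1 - x" "1/2"] by auto
  moreover have "(1/2::real)^(Suc n) \<le> (1/2)^n" by (rule power_decreasing) auto
  ultimately have "x < aa (Suc n)" unfolding aa_def by linarith
  then show ?thesis by blast
qed

lemma idx_bounds: assumes "0 \<le> x" "x < 1" shows "aa (idx x) \<le> x" "x < aa (Suc (idx x))"
proof -
  show "x < aa (Suc (idx x))" unfolding idx_def using idx_ex[OF assms(2)] by (rule LeastI_ex)
  show "aa (idx x) \<le> x"
  proof (cases "idx x")
    case 0 then show ?thesis using assms by (simp add: aa_0)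
  next
    case (Suc m)
    then have "\<not> x < aa (Suc m)" using not_less_Least[of m "\<lambda>n. x < aa (Suc n)"] by (simp add: idx_def)
    then show ?thesis using Suc by simp
  qed
qed

lemma idx_unique: assumes "aa n \<le> x" "x < aa (Suc n)" shows "idx x = n"
proof -
  have x: "0 \<le> x" "x < 1" using assms aa_nonneg[of n] aa_less1[of "Suc n"] by auto
  have "idx x \<le> n" unfolding idx_def using assms(2) by (rule Least_le)
  moreover have "\<not> idx x < n"
  proof
    assume "idx x < n"
    then have "aa (Suc (idx x)) \<le> aa n" by (intro aa_mono) simp
    then show False using idx_bounds(2)[OF x] assms(1) by simp
  qed
  ultimately show ?thesis by simp
qed

lemma idx_emb: "0 \<le> t \<Longrightarrow> t < 1 \<Longrightarrow> idx (emb n t) = n"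
  using emb_block[of t n] emb_lt[of t n] by (intro idx_unique) auto

lemma pos_emb: "0 \<le> t \<Longrightarrow> t < 1 \<Longrightarrow> pos (emb n t) = t"
  using idx_emb[of t n] LL_pos[of n] by (simp add: pos_def emb_def)

lemma emb_idx_pos: "0 \<le> x \<Longrightarrow> x < 1 \<Longrightarrow> emb (idx x) (pos x) = x"
  using LL_pos[of "idx x"] by (simp add: pos_def emb_def)

lemma pos_bounds: assumes "0 \<le> x" "x < 1" shows "0 \<le> pos x" "pos x < 1"
  using idx_bounds[OF assms] LL_pos[of "idx x"] by (auto simp: pos_def aa_Suc field_simps)

lemma block_sub: "{aa n..aa (Suc n)} \<subseteq> {0..1}"
  using aa_nonneg[of n] aa_less1[of "Suc n"] by auto

lemma emb_image: "emb n ` {0..1} = {aa n..aa (Suc n)}"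
proof (rule Set.set_eqI)
  fix x show "x \<in> emb n ` {0..1} \<longleftrightarrow> x \<in> {aa n..aa (Suc n)}"
  proof
    assume "x \<in> emb n ` {0..1}" then show "x \<in> {aa n..aa (Suc n)}" using emb_block by auto
  next
    assume x: "x \<in> {aa n..aa (Suc n)}"
    define t where "t = (x - aa n) / LL n"
    have "emb n t = x" using LL_pos[of n] by (simp add: t_def emb_def)
    moreover have "t \<in> {0..1}" using x LL_pos[of n] by (auto simp: t_def aa_Suc field_simps)
    ultimately show "x \<in> emb n ` {0..1}" by (metis image_eqI)
  qed
qed

lemma emb_inj: "emb n x = emb n y \<longleftrightarrow> x = y"
  using LL_pos[of n] by (auto simp: emb_def)

lemma sets_01: "{0..1::real} \<in> sets lebesgue" by simp

lemma sets_lam: "A \<in> sets lam \<longleftrightarrow> A \<subseteq> {0..1} \<and> A \<in> sets lebesgue"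
  by (rule sets_restrict_space_iff) simp

lemma null_lam: "A \<in> null_sets lam \<longleftrightarrow> A \<subseteq> {0..1} \<and> A \<in> null_sets lebesgue"
  by (rule null_sets_restrict_space) simp

lemma emb_meas: "emb n \<in> lam \<rightarrow>\<^sub>M lam"
proof -
  have "emb n \<in> lebesgue \<rightarrow>\<^sub>M lebesgue" unfolding emb_eq using LL_pos[of n] by (intro aff_meas) simp
  then show ?thesis by (rule measurable_restrict_space3) (use emb_range in auto)
qed

lemma emb_null: assumes "N \<in> null_sets lam" shows "emb n -` N \<inter> {0..1} \<in> null_sets lam"
proof -
  have "emb n -` N \<in> null_sets lebesgue" unfolding emb_eq using LL_pos[of n] assms
    by (intro aff_null) (auto simp: null_lam)
  then have "emb n -` N \<inter> {0..1} \<in> null_sets lebesgue" by (rule null_set_Int2) simp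
  then show ?thesis by (simp add: null_lam)
qed

lemma AE_emb: assumes "AE x in lam. P x" shows "AE t in lam. P (emb n t)"
proof -
  from assms obtain N where N: "{x \<in> space lam. \<not> P x} \<subseteq> N" "N \<in> null_sets lam"
    by (metis AE_E null_setsI)
  have "{t \<in> space lam. \<not> P (emb n t)} \<subseteq> emb n -` N \<inter> {0..1}"
    using N(1) emb_range by auto
  then show ?thesis by (rule AE_I'[OF emb_null[OF N(2)]])
qed

lemma AE_emb_rev: assumes "AE t in lam. P (emb n t)" shows "AE x in lam. x \<in> {aa n..aa (Suc n)} \<longrightarrow> P x"
proof -
  from assms obtain N where N: "{t \<in> space lam. \<not> P (emb n t)} \<subseteq> N" "N \<in> null_sets lam"
    by (metis AE_E null_setsI)
  have "emb n ` N \<in> null_sets lebesgue" unfolding emb_eq using LL_pos[of n] N(2)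
    by (intro aff_image_null) (auto simp: null_lam)
  then have N2: "emb n ` N \<inter> {0..1} \<in> null_sets lam"
    by (simp add: null_lam null_set_Int1 null_set_Int2)
  have "{x \<in> space lam. \<not> (x \<in> {aa n..aa (Suc n)} \<longrightarrow> P x)} \<subseteq> emb n ` N \<inter> {0..1}"
  proof
    fix x assume x: "x \<in> {x \<in> space lam. \<not> (x \<in> {aa n..aa (Suc n)} \<longrightarrow> P x)}"
    then have "x \<in> emb n ` {0..1}" using emb_image by auto
    then obtain t where t: "t \<in> {0..1}" "x = emb n t" by blast
    then have "t \<in> N" using N(1) x by auto
    then show "x \<in> emb n ` N \<inter> {0..1}" using t x by auto
  qed
  then show ?thesis using N2 by (intro AE_I') auto
qed



lemma emb_integral:
  fixes g :: "real \<Rightarrow> real"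
  assumes g[measurable]: "g \<in> borel_measurable lam" and A: "A \<in> sets lam"
  shows "integrable lam (\<lambda>t. indicator A t * (LL n * g (emb n t))) \<longleftrightarrow> integrable lam (\<lambda>x. indicator (emb n ` A) x * g x)"
    and "(\<integral>t. indicator A t * (LL n * g (emb n t)) \<partial>lam) = (\<integral>x. indicator (emb n ` A) x * g x \<partial>lam)"
proof -
  have A01: "A \<subseteq> {0..1}" "A \<in> sets lebesgue" using A by (auto simp: sets_lam)
  have EA: "emb n ` A \<in> sets lebesgue" unfolding emb_eq using LL_pos[of n] A01 by (intro aff_image_sets) auto
  have EA01: "emb n ` A \<subseteq> {0..1}" using A01 emb_range by auto
  have EAl[measurable]: "emb n ` A \<in> sets lam" using EA EA01 by (simp add: sets_lam)
  have Al[measurable]: "A \<in> sets lam" by fact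
  define h where "h x = (if x \<in> {0..1} then indicator (emb n ` A) x * g x else 0)" for x
  have gm: "(\<lambda>x. indicator (emb n ` A) x * g x) \<in> borel_measurable lam" by measurable
  have hm: "h \<in> borel_measurable lebesgue" unfolding h_def[abs_def] by (rule borel_measurable_if_I[OF gm sets_01])
  have hemb: "h (emb n t) = indicator A t * g (emb n t)" for t
  proof (cases "t \<in> A")
    case True
    then have "emb n t \<in> emb n ` A" "emb n t \<in> {0..1}" using EA01 by auto
    then show ?thesis using True by (simp add: h_def)
  next
    case False
    then have "emb n t \<notin> emb n ` A" by (auto simp: emb_inj)
    then show ?thesis using False by (simp add: h_def)
  qed
  have haff: "(\<lambda>x. h (aa n + LL n * x)) = (\<lambda>t. indicator A t * g (emb n t))"
    using hemb by (auto simp: emb_def)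
  have LLn: "LL n \<noteq> 0" "\<bar>LL n\<bar> = LL n" using LL_pos[of n] by auto
  have ifeq: "(\<lambda>t. if t \<in> {0..1} then indicator A t * (LL n * g (emb n t)) else 0) = (\<lambda>t. LL n * (indicator A t * g (emb n t)))"
  proof (rule ext)
    fix t show "(if t \<in> {0..1} then indicator A t * (LL n * g (emb n t)) else 0) = LL n * (indicator A t * g (emb n t))"
      using A01 by (cases "t \<in> A") auto
  qed
  have "integrable lam (\<lambda>x. indicator (emb n ` A) x * g x) \<longleftrightarrow> integrable lebesgue h"
    unfolding h_def[abs_def] using Lebesgue_Measure.integrable_restrict_UNIV[OF sets_01, of "\<lambda>x. indicator (emb n ` A) x * g x"] by simp
  also have "\<dots> \<longleftrightarrow> integrable lebesgue (\<lambda>t. indicator A t * g (emb n t))"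
    using aff_integral(1)[OF LLn(1) hm, of "aa n"] haff by simp
  also have "\<dots> \<longleftrightarrow> integrable lebesgue (\<lambda>t. LL n * (indicator A t * g (emb n t)))"
    using LLn by simp
  also have "\<dots> \<longleftrightarrow> integrable lam (\<lambda>t. indicator A t * (LL n * g (emb n t)))"
    unfolding ifeq[symmetric] using Lebesgue_Measure.integrable_restrict_UNIV[OF sets_01, of "\<lambda>t. indicator A t * (LL n * g (emb n t))"] by simp
  finally show "integrable lam (\<lambda>t. indicator A t * (LL n * g (emb n t))) \<longleftrightarrow> integrable lam (\<lambda>x. indicator (emb n ` A) x * g x)" by simp
  have "(\<integral>x. indicator (emb n ` A) x * g x \<partial>lam) = integral\<^sup>L lebesgue h"
    unfolding h_def[abs_def] using Lebesgue_Measure.integral_restrict_UNIV[OF sets_01, of "\<lambda>x. indicator (emb n ` A) x * g x"] by simp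
  also have "\<dots> = LL n * integral\<^sup>L lebesgue (\<lambda>t. indicator A t * g (emb n t))"
    using aff_integral(2)[OF LLn(1) hm, of "aa n"] haff LLn by simp
  also have "\<dots> = integral\<^sup>L lebesgue (\<lambda>t. LL n * (indicator A t * g (emb n t)))"
    by simp
  also have "\<dots> = (\<integral>t. indicator A t * (LL n * g (emb n t)) \<partial>lam)"
    unfolding ifeq[symmetric] using Lebesgue_Measure.integral_restrict_UNIV[OF sets_01, of "\<lambda>t. indicator A t * (LL n * g (emb n t))"] by simp
  finally show "(\<integral>t. indicator A t * (LL n * g (emb n t)) \<partial>lam) = (\<integral>x. indicator (emb n ` A) x * g x \<partial>lam)" by simp
qed



lemma lam_finite: "finite_measure lam"
  by (rule finite_measure_lebesgue_on) simp

lemma lam_sigma: "sigma_finite_measure lam"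
  using lam_finite by (rule finite_measure.axioms(1))

definition good :: "(real \<Rightarrow> real) \<Rightarrow> (real \<Rightarrow> real) \<Rightarrow> bool" where
  "good \<phi> \<psi> \<longleftrightarrow> \<phi> \<in> lam \<rightarrow>\<^sub>M lam \<and> \<psi> \<in> lam \<rightarrow>\<^sub>M lam \<and>
     (\<forall>x\<in>{0..1}. \<psi> (\<phi> x) = x \<and> \<phi> (\<psi> x) = x) \<and>
     (\<forall>N\<in>null_sets lam. \<phi> -` N \<inter> {0..1} \<in> null_sets lam) \<and>
     (\<forall>N\<in>null_sets lam. \<psi> -` N \<inter> {0..1} \<in> null_sets lam)"

lemma good_sym: "good \<phi> \<psi> \<Longrightarrow> good \<psi> \<phi>"
  unfolding good_def by blast

lemma good_id: "good (\<lambda>x. x) (\<lambda>x. x)"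
  unfolding good_def by (auto simp: null_lam Int_absorb2)

lemma aeq_refl: "aeq f f" by (simp add: aeq_def)
lemma aeq_sym: "aeq f g \<Longrightarrow> aeq g f" by (auto simp: aeq_def elim: AE_mp)
lemma aeq_trans: "aeq f g \<Longrightarrow> aeq g h \<Longrightarrow> aeq f h"
  unfolding aeq_def by (auto elim: AE_mp)

context
  fixes \<phi> \<psi> :: "real \<Rightarrow> real"
  assumes G: "good \<phi> \<psi>"
begin

lemma phi_meas[measurable]: "\<phi> \<in> lam \<rightarrow>\<^sub>M lam" using G by (simp add: good_def)
lemma psi_meas[measurable]: "\<psi> \<in> lam \<rightarrow>\<^sub>M lam" using G by (simp add: good_def)
lemma psi_phi: "x \<in> {0..1} \<Longrightarrow> \<psi> (\<phi> x) = x" using G by (simp add: good_def)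
lemma phi_psi: "x \<in> {0..1} \<Longrightarrow> \<phi> (\<psi> x) = x" using G by (simp add: good_def)
lemma phi_null: "N \<in> null_sets lam \<Longrightarrow> \<phi> -` N \<inter> {0..1} \<in> null_sets lam" using G by (simp add: good_def)
lemma psi_null: "N \<in> null_sets lam \<Longrightarrow> \<psi> -` N \<inter> {0..1} \<in> null_sets lam" using G by (simp add: good_def)
lemma phi_range: "x \<in> {0..1} \<Longrightarrow> \<phi> x \<in> {0..1}"
  using measurable_space[OF phi_meas] by simp
lemma psi_range: "x \<in> {0..1} \<Longrightarrow> \<psi> x \<in> {0..1}"
  using measurable_space[OF psi_meas] by simp

lemma inv_phi: "x \<in> {0..1} \<Longrightarrow> inv_into {0..1} \<phi> x = \<psi> x"
proof -
  assume x: "x \<in> {0..1}"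
  have "inj_on \<phi> {0..1}" by (rule inj_on_inverseI[where g=\<psi>]) (simp add: psi_phi)
  then show ?thesis using x psi_range[OF x] phi_psi[OF x] by (intro inv_into_f_eq) auto
qed

lemma ac1: "absolutely_continuous lam (distr lam lam \<phi>)"
  unfolding absolutely_continuous_def
proof
  fix N assume N: "N \<in> null_sets lam"
  then have "N \<in> sets lam" by auto
  moreover have "emeasure (distr lam lam \<phi>) N = 0"
    using N phi_null[OF N] by (subst emeasure_distr) auto
  ultimately show "N \<in> null_sets (distr lam lam \<phi>)" by (auto simp: null_sets_def)
qed

lemma ac2: "absolutely_continuous (distr lam lam \<phi>) lam"
  unfolding absolutely_continuous_def
proof
  fix N assume N: "N \<in> null_sets (distr lam lam \<phi>)"
  then have Ns: "N \<in> sets lam" by (auto simp: null_sets_def)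
  have "emeasure lam (\<phi> -` N \<inter> space lam) = 0"
    using N Ns by (auto simp: null_sets_def emeasure_distr)
  then have "\<phi> -` N \<inter> {0..1} \<in> null_sets lam"
    using measurable_sets[OF phi_meas Ns] by (auto simp: null_sets_def)
  then have 1: "\<psi> -` (\<phi> -` N \<inter> {0..1}) \<inter> {0..1} \<in> null_sets lam" by (rule psi_null)
  have "N \<subseteq> {0..1}" using Ns by (simp add: sets_lam)
  then have "\<psi> -` (\<phi> -` N \<inter> {0..1}) \<inter> {0..1} = N"
    using phi_psi psi_range by auto
  then show "N \<in> null_sets lam" using 1 by simp
qed

lemma bij_phi: "bij_betw \<phi> {0..1} {0..1}"
  by (rule bij_betw_byWitness[where f'=\<psi>]) (use psi_phi phi_psi phi_range psi_range in auto)

lemma nonsingular: "nonsingular_bij \<phi>"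
proof -
  have "inv_into {0..1} \<phi> \<in> lam \<rightarrow>\<^sub>M lam"
    using psi_meas by (rule measurable_cong[THEN iffD1, rotated]) (simp add: inv_phi)
  then show ?thesis unfolding nonsingular_bij_def using bij_phi phi_meas ac1 ac2 by auto
qed

definition "rho x = enn2real (RN_deriv lam (distr lam lam \<phi>) x)"

lemma rho_nonneg: "0 \<le> rho x" by (simp add: rho_def)

lemma rho_meas[measurable]: "rho \<in> borel_measurable lam"
  unfolding rho_def by measurable

lemma density_rho: "density lam (\<lambda>x. ennreal (rho x)) = distr lam lam \<phi>"
proof -
  interpret sigma_finite_measure lam by (rule lam_sigma)
  have fin: "finite_measure (distr lam lam \<phi>)"
    using lam_finite by (rule finite_measure.finite_measure_distr) (rule phi_meas)
  have "AE x in lam. RN_deriv lam (distr lam lam \<phi>) x \<noteq> \<infinity>"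
    using fin ac1 by (intro RN_deriv_finite) (auto intro: finite_measure.axioms(1))
  then have "AE x in lam. ennreal (rho x) = RN_deriv lam (distr lam lam \<phi>) x"
    by eventually_elim (auto simp: rho_def ennreal_enn2real_if)
  then have "density lam (\<lambda>x. ennreal (rho x)) = density lam (RN_deriv lam (distr lam lam \<phi>))"
    by (intro density_cong) auto
  also have "\<dots> = distr lam lam \<phi>"
    using ac1 by (intro density_RN_deriv) auto
  finally show ?thesis .
qed

lemma transfer:
  fixes k :: "real \<Rightarrow> real"
  assumes k[measurable]: "k \<in> borel_measurable lam"
  shows "integrable lam (\<lambda>x. rho x * k x) \<longleftrightarrow> integrable lam (\<lambda>y. k (\<phi> y))"
    and "(\<integral>x. rho x * k x \<partial>lam) = (\<integral>y. k (\<phi> y) \<partial>lam)"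
proof -
  have "integrable lam (\<lambda>x. rho x * k x) \<longleftrightarrow> integrable (density lam (\<lambda>x. ennreal (rho x))) k"
    by (subst integrable_density) (auto simp: rho_nonneg)
  also have "\<dots> \<longleftrightarrow> integrable lam (\<lambda>y. k (\<phi> y))"
    unfolding density_rho by (rule integrable_distr_eq) auto
  finally show "integrable lam (\<lambda>x. rho x * k x) \<longleftrightarrow> integrable lam (\<lambda>y. k (\<phi> y))" .
  have "(\<integral>x. rho x * k x \<partial>lam) = integral\<^sup>L (density lam (\<lambda>x. ennreal (rho x))) k"
    by (subst integral_density) (auto simp: rho_nonneg)
  also have "\<dots> = (\<integral>y. k (\<phi> y) \<partial>lam)"
    unfolding density_rho by (rule integral_distr) auto
  finally show "(\<integral>x. rho x * k x \<partial>lam) = (\<integral>y. k (\<phi> y) \<partial>lam)" .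
qed

lemma Tphi_eq: "x \<in> {0..1} \<Longrightarrow> Tphi \<phi> f x = rho x * f (\<psi> x)"
  by (simp add: Tphi_def rho_def inv_phi)

end



lemma L1_meas: "f \<in> L1 \<Longrightarrow> f \<in> borel_measurable lam"
  by (simp add: L1_def)

lemma Tphi_lin: "Tphi \<phi> (\<lambda>x. a * f x + b * h x) = (\<lambda>x. a * Tphi \<phi> f x + b * Tphi \<phi> h x)"
  by (rule ext) (simp add: Tphi_def algebra_simps)

lemma Tphi_abs: "Tphi \<phi> (\<lambda>x. \<bar>f x\<bar>) = (\<lambda>x. \<bar>Tphi \<phi> f x\<bar>)"
  by (rule ext) (simp add: Tphi_def abs_mult)

context
  fixes \<phi> \<psi> :: "real \<Rightarrow> real"
  assumes G: "good \<phi> \<psi>"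
begin

lemma Tphi_L1: assumes f: "f \<in> L1" shows "Tphi \<phi> f \<in> L1"
proof -
  have fm[measurable]: "f \<in> borel_measurable lam" using f by (simp add: L1_meas)
  note [measurable] = psi_meas[OF G] phi_meas[OF G]
  have km: "(\<lambda>x. f (\<psi> x)) \<in> borel_measurable lam" by measurable
  have "integrable lam (\<lambda>y. f (\<psi> (\<phi> y))) \<longleftrightarrow> integrable lam f"
    by (rule Bochner_Integration.integrable_cong) (auto simp: psi_phi[OF G])
  then have "integrable lam (\<lambda>y. f (\<psi> (\<phi> y)))" using f by (simp add: L1_def)
  then have "integrable lam (\<lambda>x. rho \<phi> x * f (\<psi> x))" using transfer(1)[OF G km] by simp
  moreover have "integrable lam (\<lambda>x. rho \<phi> x * f (\<psi> x)) \<longleftrightarrow> integrable lam (Tphi \<phi> f)"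
    by (rule Bochner_Integration.integrable_cong) (auto simp: Tphi_eq[OF G])
  ultimately have "integrable lam (Tphi \<phi> f)" by simp
  then show ?thesis by (simp add: L1_def)
qed

lemma Tphi_norm: assumes f: "f \<in> L1" shows "l1norm (Tphi \<phi> f) = l1norm f"
proof -
  have fm[measurable]: "f \<in> borel_measurable lam" using f by (simp add: L1_meas)
  note [measurable] = psi_meas[OF G] phi_meas[OF G]
  have km: "(\<lambda>x. \<bar>f (\<psi> x)\<bar>) \<in> borel_measurable lam" by measurable
  have "l1norm (Tphi \<phi> f) = (\<integral>x. rho \<phi> x * \<bar>f (\<psi> x)\<bar> \<partial>lam)"
    unfolding l1norm_def by (rule Bochner_Integration.integral_cong) (auto simp: Tphi_eq[OF G] abs_mult abs_of_nonneg[OF rho_nonneg[OF G]])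
  also have "\<dots> = (\<integral>y. \<bar>f (\<psi> (\<phi> y))\<bar> \<partial>lam)" by (rule transfer(2)[OF G km])
  also have "\<dots> = l1norm f"
    unfolding l1norm_def by (rule Bochner_Integration.integral_cong) (auto simp: psi_phi[OF G])
  finally show ?thesis .
qed

lemma Tphi_setint:
  assumes f: "f \<in> L1" and A: "A \<in> sets lam"
  shows "(\<integral>x. indicator A x * Tphi \<phi> f x \<partial>lam) = (\<integral>y. indicator A (\<phi> y) * f y \<partial>lam)"
proof -
  have fm[measurable]: "f \<in> borel_measurable lam" using f by (simp add: L1_meas)
  have [measurable]: "A \<in> sets lam" by fact
  note [measurable] = psi_meas[OF G] phi_meas[OF G]
  have km: "(\<lambda>x. indicator A x * f (\<psi> x)) \<in> borel_measurable lam" by measurable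
  have "(\<integral>x. indicator A x * Tphi \<phi> f x \<partial>lam) = (\<integral>x. rho \<phi> x * (indicator A x * f (\<psi> x)) \<partial>lam)"
    by (rule Bochner_Integration.integral_cong) (auto simp: Tphi_eq[OF G])
  also have "\<dots> = (\<integral>y. indicator A (\<phi> y) * f (\<psi> (\<phi> y)) \<partial>lam)" by (rule transfer(2)[OF G km])
  also have "\<dots> = (\<integral>y. indicator A (\<phi> y) * f y \<partial>lam)"
    by (rule Bochner_Integration.integral_cong) (auto simp: psi_phi[OF G])
  finally show ?thesis .
qed

lemma Tphi_aeq: assumes "aeq f h" shows "aeq (Tphi \<phi> f) (Tphi \<phi> h)"
proof -
  from assms obtain N where N: "{x \<in> space lam. \<not> f x = h x} \<subseteq> N" "N \<in> null_sets lam"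
    unfolding aeq_def by (metis AE_E null_setsI)
  have "{x \<in> space lam. \<not> Tphi \<phi> f x = Tphi \<phi> h x} \<subseteq> \<psi> -` N \<inter> {0..1}"
  proof
    fix x assume x: "x \<in> {x \<in> space lam. \<not> Tphi \<phi> f x = Tphi \<phi> h x}"
    then have x01: "x \<in> {0..1}" by simp
    then have "f (\<psi> x) \<noteq> h (\<psi> x)" using x by (auto simp: Tphi_eq[OF G])
    then have "\<psi> x \<in> N" using N(1) psi_range[OF G x01] by auto
    then show "x \<in> \<psi> -` N \<inter> {0..1}" using x01 by simp
  qed
  then show ?thesis unfolding aeq_def by (rule AE_I'[OF psi_null[OF G N(2)]])
qed

end

lemma Tphi_comp:
  assumes G1: "good \<phi>1 \<psi>1" and G2: "good \<phi>2 \<psi>2" and G3: "good \<phi>3 \<psi>3"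
    and c: "\<And>x. x \<in> {0..1} \<Longrightarrow> \<phi>3 x = \<phi>1 (\<phi>2 x)" and f: "f \<in> L1"
  shows "aeq (Tphi \<phi>3 f) (Tphi \<phi>1 (Tphi \<phi>2 f))"
proof -
  have g: "Tphi \<phi>2 f \<in> L1" by (rule Tphi_L1[OF G2 f])
  have i3: "Tphi \<phi>3 f \<in> L1" by (rule Tphi_L1[OF G3 f])
  have i1: "Tphi \<phi>1 (Tphi \<phi>2 f) \<in> L1" by (rule Tphi_L1[OF G1 g])
  show ?thesis unfolding aeq_def
  proof (rule density_unique_real)
    show "integrable lam (Tphi \<phi>3 f)" using i3 by (simp add: L1_def)
    show "integrable lam (Tphi \<phi>1 (Tphi \<phi>2 f))" using i1 by (simp add: L1_def)
    fix A assume A: "A \<in> sets lam"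
    define A' where "A' = \<phi>1 -` A \<inter> space lam"
    have A': "A' \<in> sets lam" unfolding A'_def using phi_meas[OF G1] A by (rule measurable_sets)
    have "(\<integral>x \<in> A. Tphi \<phi>3 f x \<partial>lam) = (\<integral>x. indicator A x * Tphi \<phi>3 f x \<partial>lam)"
      by (simp add: set_lebesgue_integral_def)
    also have "\<dots> = (\<integral>y. indicator A (\<phi>3 y) * f y \<partial>lam)" by (rule Tphi_setint[OF G3 f A])
    also have "\<dots> = (\<integral>y. indicator A' (\<phi>2 y) * f y \<partial>lam)"
    proof (rule Bochner_Integration.integral_cong)
      fix y assume "y \<in> space lam"
      then have y: "y \<in> {0..1}" "\<phi>2 y \<in> {0..1}" using phi_range[OF G2] by auto
      then show "indicator A (\<phi>3 y) * f y = indicator A' (\<phi>2 y) * f y"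
        by (simp add: c A'_def indicator_def)
    qed simp
    also have "\<dots> = (\<integral>x. indicator A' x * Tphi \<phi>2 f x \<partial>lam)" by (rule Tphi_setint[OF G2 f A', symmetric])
    also have "\<dots> = (\<integral>x. indicator A (\<phi>1 x) * Tphi \<phi>2 f x \<partial>lam)"
      by (rule Bochner_Integration.integral_cong) (auto simp: A'_def indicator_def)
    also have "\<dots> = (\<integral>x. indicator A x * Tphi \<phi>1 (Tphi \<phi>2 f) x \<partial>lam)" by (rule Tphi_setint[OF G1 g A, symmetric])
    also have "\<dots> = (\<integral>x \<in> A. Tphi \<phi>1 (Tphi \<phi>2 f) x \<partial>lam)"
      by (simp add: set_lebesgue_integral_def)
    finally show "(\<integral>x \<in> A. Tphi \<phi>3 f x \<partial>lam) = (\<integral>x \<in> A. Tphi \<phi>1 (Tphi \<phi>2 f) x \<partial>lam)" .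
  qed
qed

lemma Tphi_id:
  assumes G: "good \<phi> \<psi>" and c: "\<And>x. x \<in> {0..1} \<Longrightarrow> \<phi> x = x" and f: "f \<in> L1"
  shows "aeq (Tphi \<phi> f) f"
proof -
  have i: "Tphi \<phi> f \<in> L1" by (rule Tphi_L1[OF G f])
  show ?thesis unfolding aeq_def
  proof (rule density_unique_real)
    show "integrable lam (Tphi \<phi> f)" using i by (simp add: L1_def)
    show "integrable lam f" using f by (simp add: L1_def)
    fix A assume A: "A \<in> sets lam"
    have "(\<integral>x \<in> A. Tphi \<phi> f x \<partial>lam) = (\<integral>x. indicator A x * Tphi \<phi> f x \<partial>lam)"
      by (simp add: set_lebesgue_integral_def)
    also have "\<dots> = (\<integral>y. indicator A (\<phi> y) * f y \<partial>lam)" by (rule Tphi_setint[OF G f A])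
    also have "\<dots> = (\<integral>y. indicator A y * f y \<partial>lam)"
      by (rule Bochner_Integration.integral_cong) (auto simp: c)
    also have "\<dots> = (\<integral>x \<in> A. f x \<partial>lam)"
      by (simp add: set_lebesgue_integral_def)
    finally show "(\<integral>x \<in> A. Tphi \<phi> f x \<partial>lam) = (\<integral>x \<in> A. f x \<partial>lam)" .
  qed
qed

lemma Tphi_lattice: assumes G: "good \<phi> \<psi>" shows "lattice_isometry (Tphi \<phi>)"
  unfolding lattice_isometry_def
proof (intro conjI ballI allI impI)
  fix f assume f: "f \<in> L1"
  show "Tphi \<phi> f \<in> L1" by (rule Tphi_L1[OF G f])
  show "l1norm (Tphi \<phi> f) = l1norm f" by (rule Tphi_norm[OF G f])
  show "aeq (Tphi \<phi> (\<lambda>x. \<bar>f x\<bar>)) (\<lambda>x. \<bar>Tphi \<phi> f x\<bar>)" by (simp add: Tphi_abs aeq_refl)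
  show "\<exists>h\<in>L1. aeq (Tphi \<phi> h) f"
  proof (intro bexI)
    have G': "good \<psi> \<phi>" by (rule good_sym[OF G])
    have "aeq (Tphi (\<lambda>x. x) f) (Tphi \<phi> (Tphi \<psi> f))"
      by (rule Tphi_comp[OF G G' good_id]) (auto simp: phi_psi[OF G] f)
    moreover have "aeq (Tphi (\<lambda>x. x) f) f" by (rule Tphi_id[OF good_id _ f]) simp
    ultimately show "aeq (Tphi \<phi> (Tphi \<psi> f)) f" by (meson aeq_sym aeq_trans)
    show "Tphi \<psi> f \<in> L1" by (rule Tphi_L1[OF G' f])
  qed
next
  fix f h assume "f \<in> L1" "h \<in> L1" "aeq f h"
  then show "aeq (Tphi \<phi> f) (Tphi \<phi> h)" by (intro Tphi_aeq[OF G])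
next
  fix f h a b assume "f \<in> L1" "h \<in> L1"
  show "aeq (Tphi \<phi> (\<lambda>x. a * f x + b * h x)) (\<lambda>x. a * Tphi \<phi> f x + b * Tphi \<phi> h x)"
    by (simp add: Tphi_lin aeq_refl)
qed



lemma pw_affine:
  fixes f :: "real \<Rightarrow> real" and p q :: "nat \<Rightarrow> real"
  assumes range: "\<And>x. x \<in> {0..1} \<Longrightarrow> f x \<in> {0..1}" and f1: "f 1 = 1"
    and aff: "\<And>x. 0 \<le> x \<Longrightarrow> x < 1 \<Longrightarrow> f x = p (idx x) + q (idx x) * x"
    and q: "\<And>n. q n \<noteq> 0"
  shows "f \<in> lam \<rightarrow>\<^sub>M lam" and "\<And>N. N \<in> null_sets lam \<Longrightarrow> f -` N \<inter> {0..1} \<in> null_sets lam"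
proof -
  define Bn where "Bn n = {aa n..<aa (Suc n)}" for n
  have pre: "f -` A \<inter> {0..1} = ({1} \<inter> A) \<union> (\<Union>n. Bn n \<inter> (\<lambda>x. p n + q n * x) -` A)" for A
  proof (rule Set.set_eqI)
    fix x show "x \<in> f -` A \<inter> {0..1} \<longleftrightarrow> x \<in> ({1} \<inter> A) \<union> (\<Union>n. Bn n \<inter> (\<lambda>x. p n + q n * x) -` A)"
    proof
      assume x: "x \<in> f -` A \<inter> {0..1}"
      show "x \<in> ({1} \<inter> A) \<union> (\<Union>n. Bn n \<inter> (\<lambda>x. p n + q n * x) -` A)"
      proof (cases "x = 1")
        case True then show ?thesis using x f1 by auto
      next
        case False
        then have x1: "0 \<le> x" "x < 1" using x by auto
        then have "x \<in> Bn (idx x)" using idx_bounds[OF x1] by (simp add: Bn_def)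
        moreover have "p (idx x) + q (idx x) * x \<in> A" using x aff[OF x1] by simp
        ultimately show ?thesis by blast
      qed
    next
      assume x: "x \<in> ({1} \<inter> A) \<union> (\<Union>n. Bn n \<inter> (\<lambda>x. p n + q n * x) -` A)"
      show "x \<in> f -` A \<inter> {0..1}"
      proof (cases "x \<in> {1} \<inter> A")
        case True then show ?thesis using f1 by auto
      next
        case False
        then obtain n where n: "x \<in> Bn n" "p n + q n * x \<in> A" using x by blast
        then have b: "aa n \<le> x" "x < aa (Suc n)" by (auto simp: Bn_def)
        then have x1: "0 \<le> x" "x < 1" using aa_nonneg[of n] aa_less1[of "Suc n"] by linarith+
        have "idx x = n" using b by (rule idx_unique)
        then show ?thesis using n aff[OF x1] x1 by simp
      qed
    qed
  qed
  have Bs: "Bn n \<in> sets lebesgue" for n by (simp add: Bn_def)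
  have Bsub: "Bn n \<subseteq> {0..1}" for n using aa_nonneg[of n] aa_less1[of "Suc n"] by (auto simp: Bn_def)
  show meas: "f \<in> lam \<rightarrow>\<^sub>M lam"
  proof (rule measurableI)
    fix x assume "x \<in> space lam" then show "f x \<in> space lam" using range by simp
  next
    fix A assume A: "A \<in> sets lam"
    then have Al: "A \<in> sets lebesgue" by (simp add: sets_lam)
    have "\<And>n. Bn n \<inter> (\<lambda>x. p n + q n * x) -` A \<in> sets lebesgue"
      using Bs aff_sets[OF q Al] by blast
    then have "(\<Union>n. Bn n \<inter> (\<lambda>x. p n + q n * x) -` A) \<in> sets lebesgue"
      by (intro sets.countable_UN) auto
    moreover have "{1} \<inter> A \<in> sets lebesgue" using Al by auto
    ultimately have "({1} \<inter> A) \<union> (\<Union>n. Bn n \<inter> (\<lambda>x. p n + q n * x) -` A) \<in> sets lebesgue" by auto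
    then have "f -` A \<inter> {0..1} \<in> sets lam" unfolding pre[symmetric] by (simp add: sets_lam)
    then show "f -` A \<inter> space lam \<in> sets lam" by simp
  qed
  fix N assume N: "N \<in> null_sets lam"
  then have Nl: "N \<in> null_sets lebesgue" by (simp add: null_lam)
  have "(\<Union>n. (\<lambda>x. p n + q n * x) -` N) \<in> null_sets lebesgue"
    using aff_null[OF q Nl] by (intro null_sets_UN) auto
  then have U: "insert 1 (\<Union>n. (\<lambda>x. p n + q n * x) -` N) \<in> null_sets lebesgue" by simp
  have sub: "f -` N \<inter> {0..1} \<subseteq> insert 1 (\<Union>n. (\<lambda>x. p n + q n * x) -` N)"
    unfolding pre by blast
  have "f -` N \<inter> {0..1} \<in> sets lam" using measurable_sets[OF meas, of N] N by auto
  then have "f -` N \<inter> {0..1} \<in> sets lebesgue" by (simp add: sets_lam)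
  then have "f -` N \<inter> {0..1} \<in> null_sets lebesgue" using U sub by (rule_tac null_sets_subset) auto
  then show "f -` N \<inter> {0..1} \<in> null_sets lam" by (simp add: null_lam)
qed

locale cgrp =
  fixes G :: "('g, 'b) monoid_scheme"
  assumes grp: "group G" and cnt: "countable (carrier G)"
begin

definition "PP = carrier G \<times> (UNIV :: nat set)"
definition "beta = to_nat_on PP"
definition "binv = from_nat_into PP"
definition "sig g n = beta (g \<otimes>\<^bsub>G\<^esub> fst (binv n), snd (binv n))"
definition "phi g x = (if 0 \<le> x \<and> x < 1 then emb (sig g (idx x)) (pos x) else x)"

lemma PP_countable: "countable PP" unfolding PP_def using cnt by simp

lemma PP_infinite: "infinite PP"
proof
  assume "finite PP"
  moreover have "carrier G \<noteq> {}" using monoid.one_closed[OF group.is_monoid[OF grp]] by blast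
  ultimately show False by (simp add: PP_def finite_cartesian_product_iff)
qed

lemma PP_ne: "PP \<noteq> {}" using PP_infinite by auto

lemma beta_binv[simp]: "beta (binv n) = n"
  unfolding beta_def binv_def using PP_countable PP_infinite by simp

lemma binv_beta[simp]: "p \<in> PP \<Longrightarrow> binv (beta p) = p"
  unfolding beta_def binv_def using PP_countable by simp

lemma binv_in: "binv n \<in> PP" unfolding binv_def by (rule from_nat_into[OF PP_ne])

lemma binv_fst: "fst (binv n) \<in> carrier G" using binv_in[of n] by (auto simp: PP_def)

lemma binv_sig: "g \<in> carrier G \<Longrightarrow> binv (sig g n) = (g \<otimes>\<^bsub>G\<^esub> fst (binv n), snd (binv n))"
  unfolding sig_def using binv_fst[of n] group.subgroup_self[OF grp]
  by (intro binv_beta) (simp add: PP_def group.is_monoid[OF grp] monoid.m_closed)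

lemma sig_mult: "g \<in> carrier G \<Longrightarrow> h \<in> carrier G \<Longrightarrow> sig (g \<otimes>\<^bsub>G\<^esub> h) n = sig g (sig h n)"
  using binv_sig[of h n] binv_fst[of n]
  by (simp add: sig_def group.is_monoid[OF grp] monoid.m_assoc)

lemma sig_one: "sig \<one>\<^bsub>G\<^esub> n = n"
proof -
  have "sig \<one>\<^bsub>G\<^esub> n = beta (fst (binv n), snd (binv n))"
    using binv_fst[of n] by (simp add: sig_def group.is_monoid[OF grp] monoid.l_one)
  also have "\<dots> = n" by simp
  finally show ?thesis .
qed

lemma sig_free: assumes g: "g \<in> carrier G" and e: "sig g n = n" shows "g = \<one>\<^bsub>G\<^esub>"
proof -
  have "binv (sig g n) = binv n" using e by simp
  then have "g \<otimes>\<^bsub>G\<^esub> fst (binv n) = fst (binv n)" using binv_sig[OF g, of n] by (metis fst_conv)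
  then show ?thesis using group.r_cancel_one[OF grp binv_fst g] by simp
qed

lemma emb_01: "0 \<le> t \<Longrightarrow> t < 1 \<Longrightarrow> 0 \<le> emb n t \<and> emb n t < 1"
  using emb_block[of t n] emb_lt[of t n] aa_nonneg[of n] aa_less1[of "Suc n"] by auto

lemma phi_emb: "0 \<le> t \<Longrightarrow> t < 1 \<Longrightarrow> phi g (emb n t) = emb (sig g n) t"
  using emb_01[of t n] by (simp add: phi_def idx_emb pos_emb)

lemma phi_01: "0 \<le> x \<Longrightarrow> x < 1 \<Longrightarrow> 0 \<le> phi g x \<and> phi g x < 1"
  using pos_bounds[of x] emb_01 by (simp add: phi_def)

lemma phi_range: "x \<in> {0..1} \<Longrightarrow> phi g x \<in> {0..1}"
  using phi_01[of x g] by (cases "x < 1") (auto simp: phi_def)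

lemma phi_mult: assumes "g \<in> carrier G" "h \<in> carrier G" shows "phi (g \<otimes>\<^bsub>G\<^esub> h) x = phi g (phi h x)"
proof (cases "0 \<le> x \<and> x < 1")
  case True
  then have x1: "0 \<le> x" "x < 1" by auto
  have ph: "phi h x = emb (sig h (idx x)) (pos x)" using True by (simp add: phi_def)
  have "phi g (phi h x) = phi g (emb (sig h (idx x)) (pos x))" by (simp only: ph)
  also have "\<dots> = emb (sig g (sig h (idx x))) (pos x)"
    using pos_bounds[OF x1] by (intro phi_emb) auto
  also have "\<dots> = emb (sig (g \<otimes>\<^bsub>G\<^esub> h) (idx x)) (pos x)" by (simp add: sig_mult[OF assms])
  also have "\<dots> = phi (g \<otimes>\<^bsub>G\<^esub> h) x" using True by (simp add: phi_def)
  finally show ?thesis by simp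
next
  case False
  then have "phi k x = x" for k by (auto simp: phi_def)
  then show ?thesis by simp
qed

lemma phi_one: "phi \<one>\<^bsub>G\<^esub> x = x"
  by (simp add: phi_def sig_one emb_idx_pos)

lemma phi_aff: "0 \<le> x \<Longrightarrow> x < 1 \<Longrightarrow>
   phi g x = (aa (sig g (idx x)) - LL (sig g (idx x)) / LL (idx x) * aa (idx x)) + (LL (sig g (idx x)) / LL (idx x)) * x"
  using LL_pos[of "idx x"] by (simp add: phi_def emb_def pos_def field_simps)

lemma phi_meas_null: "phi g \<in> lam \<rightarrow>\<^sub>M lam" "N \<in> null_sets lam \<Longrightarrow> phi g -` N \<inter> {0..1} \<in> null_sets lam"
proof -
  have q: "LL (sig g n) / LL n \<noteq> 0" for n using LL_pos[of n] LL_pos[of "sig g n"] by simp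
  note pw = pw_affine[of "phi g" "\<lambda>n. aa (sig g n) - LL (sig g n) / LL n * aa n" "\<lambda>n. LL (sig g n) / LL n",
     OF phi_range _ phi_aff q]
  show "phi g \<in> lam \<rightarrow>\<^sub>M lam" by (rule pw(1)) (simp_all add: phi_def)
  show "N \<in> null_sets lam \<Longrightarrow> phi g -` N \<inter> {0..1} \<in> null_sets lam" by (rule pw(2)) (simp_all add: phi_def)
qed

lemma good_phi: assumes g: "g \<in> carrier G" shows "good (phi g) (phi (inv\<^bsub>G\<^esub> g))"
proof -
  have ig: "inv\<^bsub>G\<^esub> g \<in> carrier G" using group.inv_closed[OF grp g] .
  have 1: "phi (inv\<^bsub>G\<^esub> g) (phi g x) = x" for x
    using phi_mult[OF ig g, of x] group.l_inv[OF grp g] phi_one by simp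
  have 2: "phi g (phi (inv\<^bsub>G\<^esub> g) x) = x" for x
    using phi_mult[OF g ig, of x] group.r_inv[OF grp g] phi_one by simp
  show ?thesis unfolding good_def using phi_meas_null 1 2 by blast
qed

lemma phi_free: assumes g: "g \<in> carrier G" "g \<noteq> \<one>\<^bsub>G\<^esub>" shows "AE x in lam. phi g x \<noteq> x"
proof -
  have N: "{1} \<in> null_sets lam" by (simp add: null_lam)
  have "{x \<in> space lam. \<not> phi g x \<noteq> x} \<subseteq> {1}"
  proof
    fix x assume x: "x \<in> {x \<in> space lam. \<not> phi g x \<noteq> x}"
    show "x \<in> {1}"
    proof (rule ccontr)
      assume "x \<notin> {1}"
      then have x1: "0 \<le> x" "x < 1" using x by auto
      have "idx (phi g x) = sig g (idx x)" using x1 pos_bounds[OF x1] by (simp add: phi_def idx_emb)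
      then have "sig g (idx x) = idx x" using x by simp
      then show False using sig_free[OF g(1)] g(2) by blast
    qed
  qed
  then show ?thesis by (rule AE_I'[OF N])
qed

end


definition Blk :: "nat \<Rightarrow> (real \<Rightarrow> real) \<Rightarrow> real \<Rightarrow> real" where
  "Blk n f t = LL n * f (emb n t)"

lemma Blk_meas[measurable]: "f \<in> borel_measurable lam \<Longrightarrow> Blk n f \<in> borel_measurable lam"
proof -
  assume f: "f \<in> borel_measurable lam"
  have "(\<lambda>t. f (emb n t)) \<in> borel_measurable lam" by (rule measurable_compose[OF emb_meas f])
  then show ?thesis unfolding Blk_def[abs_def] by (rule borel_measurable_times[OF borel_measurable_const])
qed

lemma Blk_aeq: "aeq f h \<Longrightarrow> AE t in lam. Blk n f t = Blk n h t"
  unfolding aeq_def Blk_def by (drule AE_emb[where n=n]) simp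

lemma Blk_lin: "Blk n (\<lambda>x. a * f x + b * h x) t = a * Blk n f t + b * Blk n h t"
  by (simp add: Blk_def algebra_simps)

lemma Blk_scale: "Blk n (\<lambda>x. c * f x) t = c * Blk n f t"
  by (simp add: Blk_def algebra_simps)

lemma Blk_add: "Blk n (\<lambda>x. f x + h x) t = Blk n f t + Blk n h t"
  by (simp add: Blk_def algebra_simps)

lemma AE_not1: "AE x in lam. x \<noteq> 1"
proof -
  have "{1} \<in> null_sets lam" by (simp add: null_lam)
  then show ?thesis by (rule AE_I') auto
qed

lemma AE_blocks: assumes "\<And>n. AE t in lam. P (emb n t)" shows "AE x in lam. P x"
proof -
  have b: "\<And>n. AE x in lam. x \<in> {aa n..aa (Suc n)} \<longrightarrow> P x" using assms by (rule AE_emb_rev)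
  have "AE x in lam. \<forall>n. x \<in> {aa n..aa (Suc n)} \<longrightarrow> P x"
    by (rule AE_all_countable[THEN iffD2]) (use b in blast)
  then show ?thesis using AE_not1 AE_space
  proof eventually_elim
    case (elim x)
    then have x1: "0 \<le> x" "x < 1" by auto
    have "x \<in> {aa (idx x)..aa (Suc (idx x))}" using idx_bounds[OF x1] by auto
    then show ?case using elim by blast
  qed
qed


lemma emb_image_open: "emb n ` {0..<1} = {aa n..<aa (Suc n)}"
proof (rule Set.set_eqI)
  fix x show "x \<in> emb n ` {0..<1} \<longleftrightarrow> x \<in> {aa n..<aa (Suc n)}"
  proof
    assume "x \<in> emb n ` {0..<1}" then show "x \<in> {aa n..<aa (Suc n)}" using emb_block emb_lt by fastforce
  next
    assume x: "x \<in> {aa n..<aa (Suc n)}"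
    define t where "t = (x - aa n) / LL n"
    have "emb n t = x" using LL_pos[of n] by (simp add: t_def emb_def)
    moreover have "t \<in> {0..<1}" using x LL_pos[of n] by (auto simp: t_def aa_Suc field_simps)
    ultimately show "x \<in> emb n ` {0..<1}" by (metis image_eqI)
  qed
qed

definition cn :: "(real \<Rightarrow> real) \<Rightarrow> nat \<Rightarrow> real" where
  "cn f n = (\<integral>x. indicator {aa n..<aa (Suc n)} x * \<bar>f x\<bar> \<partial>lam)"

lemma sum1: "(\<Sum>n\<in>{k}. g n) = g k" by simp

lemma sets_lam_cblock: "{aa n..aa (Suc n)} \<in> sets lam"
  using block_sub[of n] by (simp add: sets_lam)

lemma L1_int: "f \<in> L1 \<Longrightarrow> integrable lam f" by (simp add: L1_def)

lemma sets_lam_block: "{aa n..<aa (Suc n)} \<in> sets lam"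
  using aa_nonneg[of n] aa_less1[of "Suc n"] by (auto simp: sets_lam)

lemma int_ind_abs: "f \<in> L1 \<Longrightarrow> A \<in> sets lam \<Longrightarrow> integrable lam (\<lambda>x. indicator A x * \<bar>f x\<bar>)"
  using integrable_real_mult_indicator[of A lam "\<lambda>x. \<bar>f x\<bar>"] by (simp add: L1_int mult.commute)

lemma int_ind: "f \<in> L1 \<Longrightarrow> A \<in> sets lam \<Longrightarrow> integrable lam (\<lambda>x. indicator A x * f x)"
  using integrable_real_mult_indicator[of A lam f] by (simp add: L1_int mult.commute)

lemma Blk_int: assumes f: "f \<in> L1" shows "integrable lam (Blk n f)"
proof -
  have fm: "f \<in> borel_measurable lam" using f by (simp add: L1_meas)
  have "integrable lam (\<lambda>x. indicator (emb n ` {0..1}) x * f x)"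
    using int_ind[OF f sets_lam_cblock] by (simp add: emb_image)
  then have "integrable lam (\<lambda>t. indicator {0..1} t * (LL n * f (emb n t)))"
    using emb_integral(1)[OF fm, of "{0..1}" n] by simp
  moreover have "integrable lam (\<lambda>t. indicator {0..1} t * (LL n * f (emb n t))) \<longleftrightarrow> integrable lam (Blk n f)"
    by (rule Bochner_Integration.integrable_cong) (auto simp: Blk_def)
  ultimately show ?thesis by simp
qed

lemma Blk_abs_int: assumes f: "f \<in> L1" shows "integrable lam (\<lambda>t. \<bar>Blk n f t\<bar>)"
  using Blk_int[OF f] by (rule integrable_abs)

lemma Blk_integral: assumes f: "f \<in> L1" shows "(\<integral>t. \<bar>Blk n f t\<bar> \<partial>lam) = cn f n"
proof -
  have fm: "(\<lambda>x. \<bar>f x\<bar>) \<in> borel_measurable lam" by (rule borel_measurable_abs) (rule L1_meas[OF f])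
  have A: "{0..<1::real} \<in> sets lam" by (auto simp: sets_lam)
  have "(\<integral>t. \<bar>Blk n f t\<bar> \<partial>lam) = (\<integral>t. indicator {0..<1} t * (LL n * \<bar>f (emb n t)\<bar>) \<partial>lam)"
  proof (rule integral_cong_AE)
    show "(\<lambda>t. \<bar>Blk n f t\<bar>) \<in> borel_measurable lam" by (rule borel_measurable_abs) (rule Blk_meas[OF L1_meas[OF f]])
    show "(\<lambda>t. indicator {0..<1} t * (LL n * \<bar>f (emb n t)\<bar>)) \<in> borel_measurable lam"
      using A measurable_compose[OF emb_meas fm] by simp
    show "AE t in lam. \<bar>Blk n f t\<bar> = indicator {0..<1} t * (LL n * \<bar>f (emb n t)\<bar>)"
      using AE_not1 AE_space
    proof eventually_elim
      case (elim t) then show ?case using LL_pos[of n] by (auto simp: Blk_def abs_mult)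
    qed
  qed
  also have "\<dots> = (\<integral>x. indicator (emb n ` {0..<1}) x * \<bar>f x\<bar> \<partial>lam)"
    by (rule emb_integral(2)[OF fm A])
  also have "\<dots> = cn f n" by (simp add: cn_def emb_image_open)
  finally show ?thesis .
qed

lemma cn_nonneg: "0 \<le> cn f n"
  unfolding cn_def by (rule Bochner_Integration.integral_nonneg) auto

lemma Blk_nn: assumes f: "f \<in> L1" shows "(\<integral>\<^sup>+t. ennreal \<bar>Blk n f t\<bar> \<partial>lam) = ennreal (cn f n)"
  using nn_integral_eq_integral[OF Blk_abs_int[OF f, of n]] Blk_integral[OF f, of n] by simp

lemma sum_cn: assumes f: "f \<in> L1" shows "(\<Sum>n. ennreal (cn f n)) \<le> ennreal (l1norm f)"
proof -
  have fm[measurable]: "f \<in> borel_measurable lam" using f by (simp add: L1_meas)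
  have Bm[measurable]: "{aa n..<aa (Suc n)} \<in> sets lam" for n by (rule sets_lam_block)
  have "ennreal (cn f n) = (\<integral>\<^sup>+x. ennreal (indicator {aa n..<aa (Suc n)} x * \<bar>f x\<bar>) \<partial>lam)" for n
    unfolding cn_def by (rule nn_integral_eq_integral[symmetric]) (auto intro: int_ind_abs[OF f sets_lam_block])
  then have "(\<Sum>n. ennreal (cn f n)) = (\<Sum>n. \<integral>\<^sup>+x. ennreal (indicator {aa n..<aa (Suc n)} x * \<bar>f x\<bar>) \<partial>lam)"
    by simp
  also have "\<dots> = (\<integral>\<^sup>+x. (\<Sum>n. ennreal (indicator {aa n..<aa (Suc n)} x * \<bar>f x\<bar>)) \<partial>lam)"
    by (rule nn_integral_suminf[symmetric]) measurable
  also have "\<dots> \<le> (\<integral>\<^sup>+x. ennreal \<bar>f x\<bar> \<partial>lam)"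
  proof (rule nn_integral_mono)
    fix x assume "x \<in> space lam"
    show "(\<Sum>n. ennreal (indicator {aa n..<aa (Suc n)} x * \<bar>f x\<bar>)) \<le> ennreal \<bar>f x\<bar>"
    proof (cases "0 \<le> x \<and> x < 1")
      case True
      then have x1: "0 \<le> x" "x < 1" by auto
      have z: "ennreal (indicator {aa n..<aa (Suc n)} x * \<bar>f x\<bar>) = 0" if "n \<notin> {idx x}" for n
      proof -
        have "x \<notin> {aa n..<aa (Suc n)}" using that idx_unique[of n x] by auto
        then show ?thesis by simp
      qed
      have "(\<Sum>n. ennreal (indicator {aa n..<aa (Suc n)} x * \<bar>f x\<bar>)) = (\<Sum>n\<in>{idx x}. ennreal (indicator {aa n..<aa (Suc n)} x * \<bar>f x\<bar>))"
        by (rule suminf_finite) (use z in auto)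
      also have "\<dots> = ennreal (indicator {aa (idx x)..<aa (Suc (idx x))} x * \<bar>f x\<bar>)" by (rule sum1)
      also have "\<dots> \<le> ennreal \<bar>f x\<bar>" by (intro ennreal_leI) (auto simp: indicator_def)
      finally show ?thesis .
    next
      case False
      have "x \<notin> {aa n..<aa (Suc n)}" for n using False aa_nonneg[of n] aa_less1[of "Suc n"] by auto
      then show ?thesis by simp
    qed
  qed
  also have "\<dots> = ennreal (l1norm f)"
    unfolding l1norm_def by (rule nn_integral_eq_integral) (auto intro: integrable_abs L1_int[OF f])
  finally show ?thesis .
qed


lemma geom_inj: fixes h :: "nat \<Rightarrow> nat" assumes "inj h"
  shows "(\<integral>\<^sup>+m. ennreal ((1/2)^(h m)) \<partial>count_space UNIV) \<le> 2"
proof -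
  have bij: "bij_betw h UNIV (range h)" using assms by (simp add: bij_betw_def)
  have "(\<integral>\<^sup>+m. ennreal ((1/2)^(h m)) \<partial>count_space UNIV) = (\<integral>\<^sup>+i. ennreal ((1/2)^i) \<partial>count_space (range h))"
    by (rule nn_integral_bij_count_space[OF bij])
  also have "\<dots> = (\<integral>\<^sup>+i. ennreal ((1/2)^i) * indicator (range h) i \<partial>count_space UNIV)"
    by (rule nn_integral_count_space_indicator) simp
  also have "\<dots> \<le> (\<integral>\<^sup>+i. ennreal ((1/2)^i) \<partial>count_space UNIV)"
    by (rule nn_integral_mono) (auto simp: indicator_def)
  also have "\<dots> = (\<Sum>i. ennreal ((1/2)^i))" by (rule nn_integral_count_space_nat)
  also have "\<dots> = ennreal (\<Sum>i. (1/2::real)^i)"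
    by (rule suminf_ennreal2) (auto simp: summable_geometric)
  also have "(\<Sum>i. (1/2::real)^i) = 2" using suminf_geometric[of "1/2::real"] by simp
  finally show ?thesis by simp
qed

lemma emeasure_lam_space: "emeasure lam {0..1} = 1"
  by (simp add: emeasure_restrict_space)

lemma pair_cs: "pair_sigma_finite (count_space (UNIV::nat set)) (count_space (UNIV::nat set))"
  by (intro pair_sigma_finite.intro sigma_finite_measure_count_space)

lemma fubini_cs: fixes f :: "nat \<Rightarrow> nat \<Rightarrow> ennreal" shows "(\<integral>\<^sup>+n. \<integral>\<^sup>+m. f n m \<partial>count_space UNIV \<partial>count_space UNIV) = (\<integral>\<^sup>+m. \<integral>\<^sup>+n. f n m \<partial>count_space UNIV \<partial>count_space (UNIV::nat set))"
proof -
  have "case_prod (\<lambda>n m. f n m) \<in> borel_measurable (count_space (UNIV::nat set) \<Otimes>\<^sub>M count_space (UNIV::nat set))"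
    by (simp add: pair_measure_countable)
  then show ?thesis using pair_sigma_finite.Fubini'[OF pair_cs] by metis
qed

sublocale cgrp \<subseteq> grpG: group G by (rule grp)

context cgrp
begin

definition "KK = carrier G \<times> (UNIV :: nat set) \<times> (UNIV :: nat set)"
definition "iota = to_nat_on KK"
definition "key n m = (inv\<^bsub>G\<^esub> (fst (binv n)) \<otimes>\<^bsub>G\<^esub> fst (binv m), snd (binv n), snd (binv m))"
definition "w n m = (1/2::real) ^ iota (key n m)"

lemma KK_countable: "countable KK" unfolding KK_def using cnt by simp

lemma key_in: "key n m \<in> KK"
  using binv_fst[of n] binv_fst[of m] by (simp add: KK_def key_def)

lemma binv_eq: "binv n = binv m \<Longrightarrow> n = m"
  by (metis beta_binv)

lemma key_fst: assumes "key n m = key n m'" shows "fst (binv m) = fst (binv m')"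
proof -
  have e: "inv\<^bsub>G\<^esub> (fst (binv n)) \<otimes>\<^bsub>G\<^esub> fst (binv m) = inv\<^bsub>G\<^esub> (fst (binv n)) \<otimes>\<^bsub>G\<^esub> fst (binv m')"
    using assms unfolding key_def by (rule Pair_inject)
  have i: "inv\<^bsub>G\<^esub> (fst (binv n)) \<in> Units G" using binv_fst[of n] by simp
  show ?thesis using grpG.Units_l_cancel[OF i binv_fst[of m] binv_fst[of m']] e by simp
qed

lemma key_fst2: assumes "key n m = key n' m" shows "fst (binv n) = fst (binv n')"
proof -
  have e: "inv\<^bsub>G\<^esub> (fst (binv n)) \<otimes>\<^bsub>G\<^esub> fst (binv m) = inv\<^bsub>G\<^esub> (fst (binv n')) \<otimes>\<^bsub>G\<^esub> fst (binv m)"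
    using assms unfolding key_def by (rule Pair_inject)
  have "inv\<^bsub>G\<^esub> (fst (binv n)) = inv\<^bsub>G\<^esub> (fst (binv n'))"
    using grpG.right_cancel[OF binv_fst[of m] grpG.inv_closed[OF binv_fst[of n]] grpG.inv_closed[OF binv_fst[of n']]] e
    by simp
  then have "inv\<^bsub>G\<^esub> (inv\<^bsub>G\<^esub> (fst (binv n))) = inv\<^bsub>G\<^esub> (inv\<^bsub>G\<^esub> (fst (binv n')))" by simp
  then show ?thesis using grpG.inv_inv[OF binv_fst[of n]] grpG.inv_inv[OF binv_fst[of n']] by simp
qed

lemma key_snd: "key n m = key n' m' \<Longrightarrow> snd (binv n) = snd (binv n') \<and> snd (binv m) = snd (binv m')"
  unfolding key_def by simp

lemma inj_row: "inj (\<lambda>m. iota (key n m))"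
proof (rule injI)
  fix m m' assume "iota (key n m) = iota (key n m')"
  then have k: "key n m = key n m'"
    by (intro inj_onD[OF inj_on_to_nat_on[OF KK_countable]]) (simp_all add: iota_def key_in)
  have "binv m = binv m'" using key_fst[OF k] key_snd[OF k] by (intro prod_eqI) auto
  then show "m = m'" by (rule binv_eq)
qed

lemma inj_col: "inj (\<lambda>n. iota (key n m))"
proof (rule injI)
  fix n n' assume "iota (key n m) = iota (key n' m)"
  then have k: "key n m = key n' m"
    by (intro inj_onD[OF inj_on_to_nat_on[OF KK_countable]]) (simp_all add: iota_def key_in)
  have "binv n = binv n'" using key_fst2[OF k] key_snd[OF k] by (intro prod_eqI) auto
  then show "n = n'" by (rule binv_eq)
qed

lemma row_sum: "(\<integral>\<^sup>+m. ennreal (w n m) \<partial>count_space UNIV) \<le> 2"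
  unfolding w_def using geom_inj[OF inj_row[of n]] by simp

lemma col_sum: "(\<integral>\<^sup>+n. ennreal (w n m) \<partial>count_space UNIV) \<le> 2"
  unfolding w_def using geom_inj[OF inj_col[of m]] by simp

lemma w_pos: "0 < w n m" by (simp add: w_def)

lemma grp_calc: assumes g: "g \<in> carrier G" and a: "a \<in> carrier G" and b: "b \<in> carrier G"
  shows "inv\<^bsub>G\<^esub> (g \<otimes>\<^bsub>G\<^esub> a) \<otimes>\<^bsub>G\<^esub> (g \<otimes>\<^bsub>G\<^esub> b) = inv\<^bsub>G\<^esub> a \<otimes>\<^bsub>G\<^esub> b"
proof -
  have ig: "inv\<^bsub>G\<^esub> g \<in> carrier G" and ia: "inv\<^bsub>G\<^esub> a \<in> carrier G" using g a by auto
  have "inv\<^bsub>G\<^esub> (g \<otimes>\<^bsub>G\<^esub> a) \<otimes>\<^bsub>G\<^esub> (g \<otimes>\<^bsub>G\<^esub> b) = (inv\<^bsub>G\<^esub> a \<otimes>\<^bsub>G\<^esub> inv\<^bsub>G\<^esub> g) \<otimes>\<^bsub>G\<^esub> (g \<otimes>\<^bsub>G\<^esub> b)"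
    by (simp only: grpG.inv_mult_group[OF g a])
  also have "\<dots> = inv\<^bsub>G\<^esub> a \<otimes>\<^bsub>G\<^esub> (inv\<^bsub>G\<^esub> g \<otimes>\<^bsub>G\<^esub> (g \<otimes>\<^bsub>G\<^esub> b))"
    by (rule grpG.m_assoc[OF ia ig grpG.m_closed[OF g b]])
  also have "inv\<^bsub>G\<^esub> g \<otimes>\<^bsub>G\<^esub> (g \<otimes>\<^bsub>G\<^esub> b) = (inv\<^bsub>G\<^esub> g \<otimes>\<^bsub>G\<^esub> g) \<otimes>\<^bsub>G\<^esub> b"
    by (rule grpG.m_assoc[OF ig g b, symmetric])
  also have "\<dots> = b" using grpG.l_inv[OF g] grpG.l_one[OF b] by simp
  finally show ?thesis .
qed

lemma w_inv: assumes g: "g \<in> carrier G" shows "w (sig g n) (sig g m) = w n m"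
proof -
  have "key (sig g n) (sig g m) = key n m"
    unfolding key_def binv_sig[OF g] using grp_calc[OF g binv_fst[of n] binv_fst[of m]] by simp
  then show ?thesis by (simp add: w_def)
qed

end


definition Dd :: "(real \<Rightarrow> real) \<Rightarrow> nat \<Rightarrow> nat \<Rightarrow> ennreal" where
  "Dd f n m = (\<integral>\<^sup>+t. \<integral>\<^sup>+s. ennreal (sqrt ((Blk n f t)\<^sup>2 + (Blk m f s)\<^sup>2)) \<partial>lam \<partial>lam)"

lemma meas_pair:
  assumes f: "f \<in> borel_measurable lam" and h: "h \<in> borel_measurable lam"
  shows "(\<lambda>z. ennreal (sqrt ((Blk n f (fst z))\<^sup>2 + (Blk m h (snd z))\<^sup>2))) \<in> borel_measurable (lam \<Otimes>\<^sub>M lam)"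
proof -
  have [measurable]: "(\<lambda>z. Blk n f (fst z)) \<in> borel_measurable (lam \<Otimes>\<^sub>M lam)"
    by (rule measurable_compose[OF measurable_fst Blk_meas[OF f]])
  have [measurable]: "(\<lambda>z. Blk m h (snd z)) \<in> borel_measurable (lam \<Otimes>\<^sub>M lam)"
    by (rule measurable_compose[OF measurable_snd Blk_meas[OF h]])
  show ?thesis by measurable
qed

lemma meas_inner:
  assumes f: "f \<in> borel_measurable lam" and h: "h \<in> borel_measurable lam"
  shows "(\<lambda>t. \<integral>\<^sup>+s. ennreal (sqrt ((Blk n f t)\<^sup>2 + (Blk m h s)\<^sup>2)) \<partial>lam) \<in> borel_measurable lam"
proof -
  have "case_prod (\<lambda>t s. ennreal (sqrt ((Blk n f t)\<^sup>2 + (Blk m h s)\<^sup>2))) \<in> borel_measurable (lam \<Otimes>\<^sub>M lam)"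
    using meas_pair[OF f h, of n m] by (simp add: case_prod_beta')
  then show ?thesis by (rule sigma_finite_measure.borel_measurable_nn_integral[OF lam_sigma])
qed

lemma meas_s:
  assumes f: "f \<in> borel_measurable lam" and h: "h \<in> borel_measurable lam"
  shows "(\<lambda>s. ennreal (sqrt ((Blk n f t)\<^sup>2 + (Blk m h s)\<^sup>2))) \<in> borel_measurable lam"
proof -
  have [measurable]: "Blk m h \<in> borel_measurable lam" by (rule Blk_meas[OF h])
  show ?thesis by measurable
qed

lemma Dd_bound: assumes f: "f \<in> L1" shows "Dd f n m \<le> ennreal (cn f n) + ennreal (cn f m)"
proof -
  have fm: "f \<in> borel_measurable lam" by (rule L1_meas[OF f])
  have am[measurable]: "Blk n f \<in> borel_measurable lam" "Blk m f \<in> borel_measurable lam" by (rule Blk_meas[OF fm])+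
  have "Dd f n m \<le> (\<integral>\<^sup>+t. \<integral>\<^sup>+s. (ennreal \<bar>Blk n f t\<bar> + ennreal \<bar>Blk m f s\<bar>) \<partial>lam \<partial>lam)"
    unfolding Dd_def
  proof (intro nn_integral_mono)
    fix t s
    have "sqrt ((Blk n f t)\<^sup>2 + (Blk m f s)\<^sup>2) \<le> \<bar>Blk n f t\<bar> + \<bar>Blk m f s\<bar>" by (rule sqrt_sum_squares_le_sum_abs)
    then show "ennreal (sqrt ((Blk n f t)\<^sup>2 + (Blk m f s)\<^sup>2)) \<le> ennreal \<bar>Blk n f t\<bar> + ennreal \<bar>Blk m f s\<bar>"
      by (simp add: ennreal_plus[symmetric] del: ennreal_plus)
  qed
  also have "\<dots> = (\<integral>\<^sup>+t. (ennreal \<bar>Blk n f t\<bar> + ennreal (cn f m)) \<partial>lam)"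
  proof (rule nn_integral_cong)
    fix t
    have "(\<integral>\<^sup>+s. (ennreal \<bar>Blk n f t\<bar> + ennreal \<bar>Blk m f s\<bar>) \<partial>lam) = (\<integral>\<^sup>+s. ennreal \<bar>Blk n f t\<bar> \<partial>lam) + (\<integral>\<^sup>+s. ennreal \<bar>Blk m f s\<bar> \<partial>lam)"
      by (rule nn_integral_add) auto
    also have "\<dots> = ennreal \<bar>Blk n f t\<bar> + ennreal (cn f m)"
      using Blk_nn[OF f, of m] by (simp add: emeasure_lam_space)
    finally show "(\<integral>\<^sup>+s. (ennreal \<bar>Blk n f t\<bar> + ennreal \<bar>Blk m f s\<bar>) \<partial>lam) = ennreal \<bar>Blk n f t\<bar> + ennreal (cn f m)" .
  qed
  also have "\<dots> = (\<integral>\<^sup>+t. ennreal \<bar>Blk n f t\<bar> \<partial>lam) + (\<integral>\<^sup>+t. ennreal (cn f m) \<partial>lam)"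
    by (rule nn_integral_add) auto
  also have "\<dots> = ennreal (cn f n) + ennreal (cn f m)"
    using Blk_nn[OF f, of n] by (simp add: emeasure_lam_space)
  finally show ?thesis .
qed


lemma sum_cn_cs: assumes f: "f \<in> L1" shows "(\<integral>\<^sup>+n. ennreal (cn f n) \<partial>count_space UNIV) \<le> ennreal (l1norm f)"
  using sum_cn[OF f] by (simp add: nn_integral_count_space_nat)

context cgrp
begin

definition "SS f = (\<integral>\<^sup>+n. \<integral>\<^sup>+m. ennreal (w n m) * Dd f n m \<partial>count_space UNIV \<partial>count_space UNIV)"
definition "Nrm f = l1norm f + enn2real (SS f)"

lemma SS_bound: assumes f: "f \<in> L1" shows "SS f \<le> 4 * ennreal (l1norm f)"
proof -
  let ?c = "\<lambda>n. ennreal (cn f n)"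
  have "SS f \<le> (\<integral>\<^sup>+n. \<integral>\<^sup>+m. (ennreal (w n m) * ?c n + ennreal (w n m) * ?c m) \<partial>count_space UNIV \<partial>count_space UNIV)"
    unfolding SS_def
  proof (intro nn_integral_mono)
    fix n m
    have "ennreal (w n m) * Dd f n m \<le> ennreal (w n m) * (?c n + ?c m)"
      by (intro mult_left_mono Dd_bound[OF f]) auto
    then show "ennreal (w n m) * Dd f n m \<le> ennreal (w n m) * ?c n + ennreal (w n m) * ?c m"
      by (simp add: distrib_left)
  qed
  also have "\<dots> = (\<integral>\<^sup>+n. (\<integral>\<^sup>+m. ennreal (w n m) * ?c n \<partial>count_space UNIV) + (\<integral>\<^sup>+m. ennreal (w n m) * ?c m \<partial>count_space UNIV) \<partial>count_space UNIV)"
    by (intro nn_integral_cong nn_integral_add) auto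
  also have "\<dots> = (\<integral>\<^sup>+n. \<integral>\<^sup>+m. ennreal (w n m) * ?c n \<partial>count_space UNIV \<partial>count_space UNIV) + (\<integral>\<^sup>+n. \<integral>\<^sup>+m. ennreal (w n m) * ?c m \<partial>count_space UNIV \<partial>count_space UNIV)"
    by (rule nn_integral_add) auto
  also have "(\<integral>\<^sup>+n. \<integral>\<^sup>+m. ennreal (w n m) * ?c m \<partial>count_space UNIV \<partial>count_space UNIV) = (\<integral>\<^sup>+m. \<integral>\<^sup>+n. ennreal (w n m) * ?c m \<partial>count_space UNIV \<partial>count_space UNIV)"
    by (rule fubini_cs)
  also have "(\<integral>\<^sup>+n. \<integral>\<^sup>+m. ennreal (w n m) * ?c n \<partial>count_space UNIV \<partial>count_space UNIV) \<le> (\<integral>\<^sup>+n. 2 * ?c n \<partial>count_space UNIV)"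
  proof (rule nn_integral_mono)
    fix n
    have "(\<integral>\<^sup>+m. ennreal (w n m) * ?c n \<partial>count_space UNIV) = (\<integral>\<^sup>+m. ennreal (w n m) \<partial>count_space UNIV) * ?c n"
      by (rule nn_integral_multc) auto
    also have "\<dots> \<le> 2 * ?c n" by (intro mult_right_mono row_sum) auto
    finally show "(\<integral>\<^sup>+m. ennreal (w n m) * ?c n \<partial>count_space UNIV) \<le> 2 * ?c n" .
  qed
  also have "(\<integral>\<^sup>+m. \<integral>\<^sup>+n. ennreal (w n m) * ?c m \<partial>count_space UNIV \<partial>count_space UNIV) \<le> (\<integral>\<^sup>+m. 2 * ?c m \<partial>count_space UNIV)"
  proof (rule nn_integral_mono)
    fix m
    have "(\<integral>\<^sup>+n. ennreal (w n m) * ?c m \<partial>count_space UNIV) = (\<integral>\<^sup>+n. ennreal (w n m) \<partial>count_space UNIV) * ?c m"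
      by (rule nn_integral_multc) auto
    also have "\<dots> \<le> 2 * ?c m" by (intro mult_right_mono col_sum) auto
    finally show "(\<integral>\<^sup>+n. ennreal (w n m) * ?c m \<partial>count_space UNIV) \<le> 2 * ?c m" .
  qed
  also have "(\<integral>\<^sup>+n. 2 * ?c n \<partial>count_space UNIV) = 2 * (\<integral>\<^sup>+n. ?c n \<partial>count_space UNIV)"
    by (rule nn_integral_cmult) auto
  also have "(\<integral>\<^sup>+n. ?c n \<partial>count_space UNIV) \<le> ennreal (l1norm f)" by (rule sum_cn_cs[OF f])
  finally have "SS f \<le> 2 * ennreal (l1norm f) + 2 * ennreal (l1norm f)" by (simp add: mult_left_mono add_mono)
  also have "2 * ennreal (l1norm f) + 2 * ennreal (l1norm f) = (2 + 2) * ennreal (l1norm f)"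
    by (rule distrib_right[symmetric])
  finally show ?thesis by simp
qed

end


lemma l1norm_nonneg: "0 \<le> l1norm f"
  unfolding l1norm_def by (rule Bochner_Integration.integral_nonneg) auto

lemma abs_meas: "f \<in> L1 \<Longrightarrow> (\<lambda>x. \<bar>f x\<bar>) \<in> borel_measurable lam"
  by (rule borel_measurable_abs) (rule L1_meas)

lemma L1_scale: "f \<in> L1 \<Longrightarrow> (\<lambda>x. c * f x) \<in> L1"
  by (simp add: L1_def)

lemma L1_add: "f \<in> L1 \<Longrightarrow> h \<in> L1 \<Longrightarrow> (\<lambda>x. f x + h x) \<in> L1"
  by (simp add: L1_def)

lemma l1norm_scale: "l1norm (\<lambda>x. c * f x) = \<bar>c\<bar> * l1norm f"
  by (simp add: l1norm_def abs_mult)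

lemma l1norm_add: assumes "f \<in> L1" "h \<in> L1" shows "l1norm (\<lambda>x. f x + h x) \<le> l1norm f + l1norm h"
proof -
  have i: "integrable lam (\<lambda>x. \<bar>f x\<bar>)" "integrable lam (\<lambda>x. \<bar>h x\<bar>)"
    using assms by (auto simp: L1_def)
  have "l1norm (\<lambda>x. f x + h x) \<le> (\<integral>x. \<bar>f x\<bar> + \<bar>h x\<bar> \<partial>lam)"
    unfolding l1norm_def using assms
    by (intro integral_mono) (auto simp: L1_def abs_triangle_ineq)
  also have "\<dots> = l1norm f + l1norm h" unfolding l1norm_def using i by (rule Bochner_Integration.integral_add)
  finally show ?thesis .
qed

lemma l1norm_aeq: assumes "f \<in> L1" "h \<in> L1" "aeq f h" shows "l1norm f = l1norm h"
  unfolding l1norm_def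
proof (rule integral_cong_AE)
  show "(\<lambda>x. \<bar>f x\<bar>) \<in> borel_measurable lam" "(\<lambda>x. \<bar>h x\<bar>) \<in> borel_measurable lam"
    using assms by (auto intro: abs_meas)
  show "AE x in lam. \<bar>f x\<bar> = \<bar>h x\<bar>" using assms(3) unfolding aeq_def by (auto elim: AE_mp)
qed

lemma l1norm_zero: assumes "f \<in> L1" shows "l1norm f = 0 \<longleftrightarrow> aeq f (\<lambda>_. 0)"
proof -
  have "l1norm f = 0 \<longleftrightarrow> (AE x in lam. \<bar>f x\<bar> = 0)"
    unfolding l1norm_def using assms by (intro integral_nonneg_eq_0_iff_AE) (auto simp: L1_def)
  then show ?thesis by (simp add: aeq_def)
qed

lemma Dd_aeq: assumes f: "f \<in> L1" and h: "h \<in> L1" and e: "aeq f h" shows "Dd f n m = Dd h n m"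
  unfolding Dd_def
proof (rule nn_integral_cong_AE)
  show "AE t in lam. (\<integral>\<^sup>+s. ennreal (sqrt ((Blk n f t)\<^sup>2 + (Blk m f s)\<^sup>2)) \<partial>lam) = (\<integral>\<^sup>+s. ennreal (sqrt ((Blk n h t)\<^sup>2 + (Blk m h s)\<^sup>2)) \<partial>lam)"
    using Blk_aeq[OF e, of n]
  proof eventually_elim
    case (elim t)
    show ?case
    proof (rule nn_integral_cong_AE)
      show "AE s in lam. ennreal (sqrt ((Blk n f t)\<^sup>2 + (Blk m f s)\<^sup>2)) = ennreal (sqrt ((Blk n h t)\<^sup>2 + (Blk m h s)\<^sup>2))"
        using Blk_aeq[OF e, of m] by eventually_elim (simp add: elim)
    qed
  qed
qed

lemma Dd_scale: assumes f: "f \<in> L1" shows "Dd (\<lambda>x. c * f x) n m = ennreal \<bar>c\<bar> * Dd f n m"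
proof -
  have fm: "f \<in> borel_measurable lam" by (rule L1_meas[OF f])
  have pt: "ennreal (sqrt ((Blk n (\<lambda>x. c * f x) t)\<^sup>2 + (Blk m (\<lambda>x. c * f x) s)\<^sup>2)) = ennreal \<bar>c\<bar> * ennreal (sqrt ((Blk n f t)\<^sup>2 + (Blk m f s)\<^sup>2))" for t s
  proof -
    have "(Blk n (\<lambda>x. c * f x) t)\<^sup>2 + (Blk m (\<lambda>x. c * f x) s)\<^sup>2 = c\<^sup>2 * ((Blk n f t)\<^sup>2 + (Blk m f s)\<^sup>2)"
      by (simp add: Blk_scale power_mult_distrib algebra_simps)
    then have "sqrt ((Blk n (\<lambda>x. c * f x) t)\<^sup>2 + (Blk m (\<lambda>x. c * f x) s)\<^sup>2) = \<bar>c\<bar> * sqrt ((Blk n f t)\<^sup>2 + (Blk m f s)\<^sup>2)"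
      by (simp add: real_sqrt_mult)
    then show ?thesis by (simp add: ennreal_mult)
  qed
  have "Dd (\<lambda>x. c * f x) n m = (\<integral>\<^sup>+t. \<integral>\<^sup>+s. ennreal \<bar>c\<bar> * ennreal (sqrt ((Blk n f t)\<^sup>2 + (Blk m f s)\<^sup>2)) \<partial>lam \<partial>lam)"
    unfolding Dd_def pt ..
  also have "\<dots> = (\<integral>\<^sup>+t. ennreal \<bar>c\<bar> * \<integral>\<^sup>+s. ennreal (sqrt ((Blk n f t)\<^sup>2 + (Blk m f s)\<^sup>2)) \<partial>lam \<partial>lam)"
    by (intro nn_integral_cong nn_integral_cmult meas_s[OF fm fm])
  also have "\<dots> = ennreal \<bar>c\<bar> * Dd f n m"
    unfolding Dd_def by (intro nn_integral_cmult meas_inner[OF fm fm])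
  finally show ?thesis .
qed

lemma Dd_add: assumes f: "f \<in> L1" and h: "h \<in> L1" shows "Dd (\<lambda>x. f x + h x) n m \<le> Dd f n m + Dd h n m"
proof -
  have fm: "f \<in> borel_measurable lam" by (rule L1_meas[OF f])
  have hm: "h \<in> borel_measurable lam" by (rule L1_meas[OF h])
  have "Dd (\<lambda>x. f x + h x) n m \<le> (\<integral>\<^sup>+t. \<integral>\<^sup>+s. (ennreal (sqrt ((Blk n f t)\<^sup>2 + (Blk m f s)\<^sup>2)) + ennreal (sqrt ((Blk n h t)\<^sup>2 + (Blk m h s)\<^sup>2))) \<partial>lam \<partial>lam)"
    unfolding Dd_def
  proof (intro nn_integral_mono)
    fix t s
    show "ennreal (sqrt ((Blk n (\<lambda>x. f x + h x) t)\<^sup>2 + (Blk m (\<lambda>x. f x + h x) s)\<^sup>2)) \<le> ennreal (sqrt ((Blk n f t)\<^sup>2 + (Blk m f s)\<^sup>2)) + ennreal (sqrt ((Blk n h t)\<^sup>2 + (Blk m h s)\<^sup>2))"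
    proof -
      have "sqrt ((Blk n f t + Blk n h t)\<^sup>2 + (Blk m f s + Blk m h s)\<^sup>2) \<le> sqrt ((Blk n f t)\<^sup>2 + (Blk m f s)\<^sup>2) + sqrt ((Blk n h t)\<^sup>2 + (Blk m h s)\<^sup>2)"
        by (rule real_sqrt_sum_squares_triangle_ineq)
      then show ?thesis unfolding Blk_add by (simp add: ennreal_plus[symmetric] del: ennreal_plus)
    qed
  qed
  also have "\<dots> = (\<integral>\<^sup>+t. (\<integral>\<^sup>+s. ennreal (sqrt ((Blk n f t)\<^sup>2 + (Blk m f s)\<^sup>2)) \<partial>lam) + (\<integral>\<^sup>+s. ennreal (sqrt ((Blk n h t)\<^sup>2 + (Blk m h s)\<^sup>2)) \<partial>lam) \<partial>lam)"
    by (intro nn_integral_cong nn_integral_add meas_s[OF fm fm] meas_s[OF hm hm])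
  also have "\<dots> = Dd f n m + Dd h n m"
    unfolding Dd_def by (intro nn_integral_add meas_inner[OF fm fm] meas_inner[OF hm hm])
  finally show ?thesis .
qed

context cgrp
begin

lemma SS_fin: assumes f: "f \<in> L1" shows "SS f < \<infinity>"
  using SS_bound[OF f] by (rule le_less_trans) (simp add: ennreal_mult_less_top)

lemma Nrm_lower: "l1norm f \<le> Nrm f" by (simp add: Nrm_def)

lemma Nrm_upper: assumes f: "f \<in> L1" shows "Nrm f \<le> 5 * l1norm f"
proof -
  have "enn2real (SS f) \<le> enn2real (4 * ennreal (l1norm f))"
    using SS_bound[OF f] by (rule enn2real_mono) (simp add: ennreal_mult_less_top)
  also have "\<dots> = 4 * l1norm f" by (simp add: enn2real_mult l1norm_nonneg)
  finally show ?thesis by (simp add: Nrm_def)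
qed

lemma SS_aeq: assumes "f \<in> L1" "h \<in> L1" "aeq f h" shows "SS f = SS h"
  unfolding SS_def using Dd_aeq[OF assms] by simp

lemma Nrm_aeq: assumes "f \<in> L1" "h \<in> L1" "aeq f h" shows "Nrm f = Nrm h"
  unfolding Nrm_def using SS_aeq[OF assms] l1norm_aeq[OF assms] by simp

lemma SS_scale: assumes f: "f \<in> L1" shows "SS (\<lambda>x. c * f x) = ennreal \<bar>c\<bar> * SS f"
proof -
  have "SS (\<lambda>x. c * f x) = (\<integral>\<^sup>+n. \<integral>\<^sup>+m. ennreal \<bar>c\<bar> * (ennreal (w n m) * Dd f n m) \<partial>count_space UNIV \<partial>count_space UNIV)"
    unfolding SS_def Dd_scale[OF f] by (simp add: ac_simps)
  also have "\<dots> = (\<integral>\<^sup>+n. ennreal \<bar>c\<bar> * \<integral>\<^sup>+m. ennreal (w n m) * Dd f n m \<partial>count_space UNIV \<partial>count_space UNIV)"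
    by (intro nn_integral_cong nn_integral_cmult) auto
  also have "\<dots> = ennreal \<bar>c\<bar> * SS f" unfolding SS_def by (intro nn_integral_cmult) auto
  finally show ?thesis .
qed

lemma Nrm_scale: assumes f: "f \<in> L1" shows "Nrm (\<lambda>x. c * f x) = \<bar>c\<bar> * Nrm f"
  unfolding Nrm_def SS_scale[OF f] l1norm_scale by (simp add: enn2real_mult distrib_left)

lemma SS_add: assumes f: "f \<in> L1" and h: "h \<in> L1" shows "SS (\<lambda>x. f x + h x) \<le> SS f + SS h"
proof -
  have "SS (\<lambda>x. f x + h x) \<le> (\<integral>\<^sup>+n. \<integral>\<^sup>+m. (ennreal (w n m) * Dd f n m + ennreal (w n m) * Dd h n m) \<partial>count_space UNIV \<partial>count_space UNIV)"
    unfolding SS_def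
  proof (intro nn_integral_mono)
    fix n m
    show "ennreal (w n m) * Dd (\<lambda>x. f x + h x) n m \<le> ennreal (w n m) * Dd f n m + ennreal (w n m) * Dd h n m"
      unfolding distrib_left[symmetric] by (intro mult_left_mono Dd_add[OF f h]) auto
  qed
  also have "\<dots> = (\<integral>\<^sup>+n. (\<integral>\<^sup>+m. ennreal (w n m) * Dd f n m \<partial>count_space UNIV) + (\<integral>\<^sup>+m. ennreal (w n m) * Dd h n m \<partial>count_space UNIV) \<partial>count_space UNIV)"
    by (intro nn_integral_cong nn_integral_add) auto
  also have "\<dots> = SS f + SS h" unfolding SS_def by (rule nn_integral_add) auto
  finally show ?thesis .
qed

lemma Nrm_add: assumes f: "f \<in> L1" and h: "h \<in> L1" shows "Nrm (\<lambda>x. f x + h x) \<le> Nrm f + Nrm h"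
proof -
  have "enn2real (SS (\<lambda>x. f x + h x)) \<le> enn2real (SS f + SS h)"
    using SS_add[OF f h] by (rule enn2real_mono) (use SS_fin[OF f] SS_fin[OF h] in simp)
  also have "\<dots> = enn2real (SS f) + enn2real (SS h)"
    using SS_fin[OF f] SS_fin[OF h] by (intro enn2real_plus) auto
  finally show ?thesis using l1norm_add[OF f h] by (simp add: Nrm_def)
qed

lemma Nrm_nonneg: "0 \<le> Nrm f" using Nrm_lower[of f] l1norm_nonneg[of f] by simp

lemma Nrm_zero: assumes f: "f \<in> L1" shows "Nrm f = 0 \<longleftrightarrow> aeq f (\<lambda>_. 0)"
proof
  assume "Nrm f = 0"
  then have "l1norm f = 0" using Nrm_lower[of f] l1norm_nonneg[of f] by simp
  then show "aeq f (\<lambda>_. 0)" using l1norm_zero[OF f] by simp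
next
  assume "aeq f (\<lambda>_. 0)"
  then have "l1norm f = 0" using l1norm_zero[OF f] by simp
  then show "Nrm f = 0" using Nrm_upper[OF f] Nrm_nonneg[of f] by simp
qed

end


lemma emb_image_sets: "A \<in> sets lam \<Longrightarrow> emb n ` A \<in> sets lam"
proof -
  assume A: "A \<in> sets lam"
  then have "emb n ` A \<in> sets lebesgue" unfolding emb_eq using LL_pos[of n]
    by (intro aff_image_sets) (auto simp: sets_lam)
  moreover have "emb n ` A \<subseteq> {0..1}" using A emb_range by (auto simp: sets_lam)
  ultimately show ?thesis by (simp add: sets_lam)
qed

lemma setint_cut:
  fixes u :: "real \<Rightarrow> real"
  assumes u: "u \<in> borel_measurable lam" and A: "A \<in> sets lam"
  shows "(\<integral>t. indicator A t * u t \<partial>lam) = (\<integral>t. indicator (A \<inter> {0..<1}) t * u t \<partial>lam)"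
proof (rule integral_cong_AE)
  have A': "A \<inter> {0..<1} \<in> sets lam" using A by (auto simp: sets_lam)
  show "(\<lambda>t. indicator A t * u t) \<in> borel_measurable lam" using u A by simp
  show "(\<lambda>t. indicator (A \<inter> {0..<1}) t * u t) \<in> borel_measurable lam" using u A' by simp
  show "AE t in lam. indicator A t * u t = indicator (A \<inter> {0..<1}) t * u t"
    using AE_not1 AE_space by eventually_elim (auto simp: indicator_def)
qed

context cgrp
begin

lemma sig_inv_sig: "g \<in> carrier G \<Longrightarrow> sig (inv\<^bsub>G\<^esub> g) (sig g n) = n"
  using sig_mult[of "inv\<^bsub>G\<^esub> g" g n] sig_one by simp

lemma sig_bij: "g \<in> carrier G \<Longrightarrow> bij_betw (sig g) UNIV UNIV"
proof -
  assume g: "g \<in> carrier G"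
  have ig: "inv\<^bsub>G\<^esub> g \<in> carrier G" using g by simp
  show ?thesis
    by (rule bij_betw_byWitness[where f'="sig (inv\<^bsub>G\<^esub> g)"])
       (use sig_inv_sig[OF g] sig_inv_sig[OF ig] g in auto)
qed

lemma Blk_T:
  assumes g: "g \<in> carrier G" and f: "f \<in> L1"
  shows "AE t in lam. Blk (sig g n) (Tphi (phi g) f) t = Blk n f t"
proof -
  have GG: "good (phi g) (phi (inv\<^bsub>G\<^esub> g))" by (rule good_phi[OF g])
  have Tf: "Tphi (phi g) f \<in> L1" by (rule Tphi_L1[OF GG f])
  have fm: "f \<in> borel_measurable lam" by (rule L1_meas[OF f])
  have Tfm: "Tphi (phi g) f \<in> borel_measurable lam" by (rule L1_meas[OF Tf])
  show ?thesis
  proof (rule density_unique_real)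
    show "integrable lam (Blk (sig g n) (Tphi (phi g) f))" by (rule Blk_int[OF Tf])
    show "integrable lam (Blk n f)" by (rule Blk_int[OF f])
    fix A assume A: "A \<in> sets lam"
    define A' where "A' = A \<inter> {0..<1}"
    have A': "A' \<in> sets lam" using A by (auto simp: sets_lam A'_def)
    have A'01: "t \<in> A' \<Longrightarrow> 0 \<le> t \<and> t < 1" for t by (auto simp: A'_def)
    have pt: "indicator (emb (sig g n) ` A') (phi g y) = (indicator (emb n ` A') y :: real)" if y: "y \<in> space lam" for y
    proof -
      have y01: "y \<in> {0..1}" using y by simp
      have "phi g y \<in> emb (sig g n) ` A' \<longleftrightarrow> y \<in> emb n ` A'"
      proof
        assume "phi g y \<in> emb (sig g n) ` A'"
        then obtain t where t: "t \<in> A'" "phi g y = emb (sig g n) t" by blast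
        have "y = phi (inv\<^bsub>G\<^esub> g) (phi g y)" using psi_phi[OF GG y01] by simp
        also have "\<dots> = emb (sig (inv\<^bsub>G\<^esub> g) (sig g n)) t" using t A'01[OF t(1)] by (simp add: phi_emb)
        also have "\<dots> = emb n t" by (simp add: sig_inv_sig[OF g])
        finally show "y \<in> emb n ` A'" using t(1) by blast
      next
        assume "y \<in> emb n ` A'"
        then obtain t where t: "t \<in> A'" "y = emb n t" by blast
        then have "phi g y = emb (sig g n) t" using A'01[OF t(1)] by (simp add: phi_emb)
        then show "phi g y \<in> emb (sig g n) ` A'" using t(1) by blast
      qed
      then show ?thesis by (simp add: indicator_def)
    qed
    have "(\<integral>t \<in> A. Blk (sig g n) (Tphi (phi g) f) t \<partial>lam) = (\<integral>t. indicator A t * Blk (sig g n) (Tphi (phi g) f) t \<partial>lam)"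
      by (simp add: set_lebesgue_integral_def)
    also have "\<dots> = (\<integral>t. indicator A' t * Blk (sig g n) (Tphi (phi g) f) t \<partial>lam)"
      unfolding A'_def by (rule setint_cut[OF Blk_meas[OF Tfm] A])
    also have "\<dots> = (\<integral>t. indicator A' t * (LL (sig g n) * Tphi (phi g) f (emb (sig g n) t)) \<partial>lam)"
      by (simp add: Blk_def)
    also have "\<dots> = (\<integral>x. indicator (emb (sig g n) ` A') x * Tphi (phi g) f x \<partial>lam)"
      by (rule emb_integral(2)[OF Tfm A'])
    also have "\<dots> = (\<integral>y. indicator (emb (sig g n) ` A') (phi g y) * f y \<partial>lam)"
      by (rule Tphi_setint[OF GG f emb_image_sets[OF A']])
    also have "\<dots> = (\<integral>y. indicator (emb n ` A') y * f y \<partial>lam)"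
      by (rule Bochner_Integration.integral_cong) (simp_all add: pt)
    also have "\<dots> = (\<integral>t. indicator A' t * (LL n * f (emb n t)) \<partial>lam)"
      by (rule emb_integral(2)[OF fm A', symmetric])
    also have "\<dots> = (\<integral>t. indicator A' t * Blk n f t \<partial>lam)"
      by (simp add: Blk_def)
    also have "\<dots> = (\<integral>t. indicator A t * Blk n f t \<partial>lam)"
      unfolding A'_def by (rule setint_cut[OF Blk_meas[OF fm] A, symmetric])
    also have "\<dots> = (\<integral>t \<in> A. Blk n f t \<partial>lam)"
      by (simp add: set_lebesgue_integral_def)
    finally show "(\<integral>t \<in> A. Blk (sig g n) (Tphi (phi g) f) t \<partial>lam) = (\<integral>t \<in> A. Blk n f t \<partial>lam)" .
  qed
qed

lemma Dd_T: assumes g: "g \<in> carrier G" and f: "f \<in> L1"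
  shows "Dd (Tphi (phi g) f) (sig g n) (sig g m) = Dd f n m"
  unfolding Dd_def
proof (rule nn_integral_cong_AE)
  let ?T = "Tphi (phi g) f"
  show "AE t in lam. (\<integral>\<^sup>+s. ennreal (sqrt ((Blk (sig g n) ?T t)\<^sup>2 + (Blk (sig g m) ?T s)\<^sup>2)) \<partial>lam) = (\<integral>\<^sup>+s. ennreal (sqrt ((Blk n f t)\<^sup>2 + (Blk m f s)\<^sup>2)) \<partial>lam)"
    using Blk_T[OF g f, of n]
  proof eventually_elim
    case (elim t)
    show ?case
    proof (rule nn_integral_cong_AE)
      show "AE s in lam. ennreal (sqrt ((Blk (sig g n) ?T t)\<^sup>2 + (Blk (sig g m) ?T s)\<^sup>2)) = ennreal (sqrt ((Blk n f t)\<^sup>2 + (Blk m f s)\<^sup>2))"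
        using Blk_T[OF g f, of m] by eventually_elim (simp add: elim)
    qed
  qed
qed

lemma SS_T: assumes g: "g \<in> carrier G" and f: "f \<in> L1" shows "SS (Tphi (phi g) f) = SS f"
proof -
  let ?T = "Tphi (phi g) f"
  have b: "bij_betw (sig g) UNIV UNIV" by (rule sig_bij[OF g])
  have "SS ?T = (\<integral>\<^sup>+n. \<integral>\<^sup>+m. ennreal (w (sig g n) m) * Dd ?T (sig g n) m \<partial>count_space UNIV \<partial>count_space UNIV)"
    unfolding SS_def by (rule nn_integral_bij_count_space[OF b, symmetric])
  also have "\<dots> = (\<integral>\<^sup>+n. \<integral>\<^sup>+m. ennreal (w (sig g n) (sig g m)) * Dd ?T (sig g n) (sig g m) \<partial>count_space UNIV \<partial>count_space UNIV)"
    by (intro nn_integral_cong nn_integral_bij_count_space[OF b, symmetric])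
  also have "\<dots> = SS f" unfolding SS_def by (simp add: w_inv[OF g] Dd_T[OF g f])
  finally show ?thesis .
qed

lemma Nrm_T: assumes g: "g \<in> carrier G" and f: "f \<in> L1" shows "Nrm (Tphi (phi g) f) = Nrm f"
  unfolding Nrm_def SS_T[OF g f] Tphi_norm[OF good_phi[OF g] f] ..

end


lemma nn_eq_split:
  fixes a b c :: "'a \<Rightarrow> ennreal"
  assumes m: "a \<in> borel_measurable M" "b \<in> borel_measurable M" "c \<in> borel_measurable M"
    and le: "\<And>x. x \<in> space M \<Longrightarrow> a x \<le> b x + c x"
    and eq: "integral\<^sup>N M a = integral\<^sup>N M b + integral\<^sup>N M c"
    and fin: "integral\<^sup>N M b + integral\<^sup>N M c \<noteq> \<infinity>"
  shows "AE x in M. a x = b x + c x"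
proof -
  define d where "d x = b x + c x - a x" for x
  have dm: "d \<in> borel_measurable M" unfolding d_def[abs_def] using m by simp
  have "integral\<^sup>N M a + integral\<^sup>N M d = (\<integral>\<^sup>+x. a x + d x \<partial>M)"
    by (rule nn_integral_add[symmetric]) (use m dm in auto)
  also have "\<dots> = (\<integral>\<^sup>+x. b x + c x \<partial>M)"
    by (rule nn_integral_cong) (simp add: d_def le add_diff_inverse_ennreal)
  also have "\<dots> = integral\<^sup>N M b + integral\<^sup>N M c" by (rule nn_integral_add) (use m in auto)
  also have "\<dots> = integral\<^sup>N M a + 0" using eq by simp
  finally have "integral\<^sup>N M d = 0" using fin eq by (simp add: ennreal_add_left_cancel)
  then have "AE x in M. d x = 0" using dm by (simp add: nn_integral_0_iff_AE)
  then show ?thesis using AE_space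
  proof eventually_elim
    case (elim x)
    then have "b x + c x - a x = 0" unfolding d_def by simp
    then have "b x + c x \<le> a x" by (rule ennreal_minus_eq_0)
    then show ?case using le[OF elim(2)] by (rule antisym[rotated])
  qed
qed

lemma mink_eq:
  fixes a b c d :: real
  assumes "sqrt ((a + c)\<^sup>2 + (b + d)\<^sup>2) = sqrt (a\<^sup>2 + b\<^sup>2) + sqrt (c\<^sup>2 + d\<^sup>2)"
  shows "a * d = b * c"
proof -
  define X where "X = sqrt (a\<^sup>2 + b\<^sup>2)"
  define Y where "Y = sqrt (c\<^sup>2 + d\<^sup>2)"
  have X2: "X\<^sup>2 = a\<^sup>2 + b\<^sup>2" unfolding X_def by simp
  have Y2: "Y\<^sup>2 = c\<^sup>2 + d\<^sup>2" unfolding Y_def by simp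
  have XY: "0 \<le> X" "0 \<le> Y" unfolding X_def Y_def by simp_all
  have "(sqrt ((a + c)\<^sup>2 + (b + d)\<^sup>2))\<^sup>2 = (X + Y)\<^sup>2" using assms unfolding X_def Y_def by simp
  then have "(a + c)\<^sup>2 + (b + d)\<^sup>2 = (X + Y)\<^sup>2" by simp
  then have "a * c + b * d = X * Y" using X2 Y2 by (simp add: power2_eq_square algebra_simps)
  then have "(a * c + b * d)\<^sup>2 = X\<^sup>2 * Y\<^sup>2" by (simp add: power_mult_distrib)
  then have "(a * c + b * d)\<^sup>2 = (a\<^sup>2 + b\<^sup>2) * (c\<^sup>2 + d\<^sup>2)" using X2 Y2 by simp
  then have "(a * d - b * c)\<^sup>2 = 0" by (simp add: power2_eq_square algebra_simps)
  then show ?thesis by simp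
qed

lemma inner_le:
  assumes f: "f \<in> L1" and h: "h \<in> L1"
  shows "(\<integral>\<^sup>+s. ennreal (sqrt ((Blk n (\<lambda>x. f x + h x) t)\<^sup>2 + (Blk m (\<lambda>x. f x + h x) s)\<^sup>2)) \<partial>lam)
     \<le> (\<integral>\<^sup>+s. ennreal (sqrt ((Blk n f t)\<^sup>2 + (Blk m f s)\<^sup>2)) \<partial>lam) + (\<integral>\<^sup>+s. ennreal (sqrt ((Blk n h t)\<^sup>2 + (Blk m h s)\<^sup>2)) \<partial>lam)"
proof -
  have fm: "f \<in> borel_measurable lam" by (rule L1_meas[OF f])
  have hm: "h \<in> borel_measurable lam" by (rule L1_meas[OF h])
  have "(\<integral>\<^sup>+s. ennreal (sqrt ((Blk n (\<lambda>x. f x + h x) t)\<^sup>2 + (Blk m (\<lambda>x. f x + h x) s)\<^sup>2)) \<partial>lam)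
     \<le> (\<integral>\<^sup>+s. (ennreal (sqrt ((Blk n f t)\<^sup>2 + (Blk m f s)\<^sup>2)) + ennreal (sqrt ((Blk n h t)\<^sup>2 + (Blk m h s)\<^sup>2))) \<partial>lam)"
  proof (intro nn_integral_mono)
    fix s
    have "sqrt ((Blk n f t + Blk n h t)\<^sup>2 + (Blk m f s + Blk m h s)\<^sup>2) \<le> sqrt ((Blk n f t)\<^sup>2 + (Blk m f s)\<^sup>2) + sqrt ((Blk n h t)\<^sup>2 + (Blk m h s)\<^sup>2)"
      by (rule real_sqrt_sum_squares_triangle_ineq)
    then show "ennreal (sqrt ((Blk n (\<lambda>x. f x + h x) t)\<^sup>2 + (Blk m (\<lambda>x. f x + h x) s)\<^sup>2)) \<le> ennreal (sqrt ((Blk n f t)\<^sup>2 + (Blk m f s)\<^sup>2)) + ennreal (sqrt ((Blk n h t)\<^sup>2 + (Blk m h s)\<^sup>2))"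
      unfolding Blk_add by (simp add: ennreal_plus[symmetric] del: ennreal_plus)
  qed
  also have "\<dots> = (\<integral>\<^sup>+s. ennreal (sqrt ((Blk n f t)\<^sup>2 + (Blk m f s)\<^sup>2)) \<partial>lam) + (\<integral>\<^sup>+s. ennreal (sqrt ((Blk n h t)\<^sup>2 + (Blk m h s)\<^sup>2)) \<partial>lam)"
    by (intro nn_integral_add meas_s[OF fm fm] meas_s[OF hm hm])
  finally show ?thesis .
qed

lemma Dd_fin: "f \<in> L1 \<Longrightarrow> Dd f n m \<noteq> \<infinity>"
  using Dd_bound[of f n m] by (auto simp: top_unique)

lemma Dd_eq_rel:
  assumes f: "f \<in> L1" and h: "h \<in> L1" and eq: "Dd (\<lambda>x. f x + h x) n m = Dd f n m + Dd h n m"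
  shows "AE t in lam. AE s in lam. Blk n f t * Blk m h s = Blk m f s * Blk n h t"
proof -
  have fm: "f \<in> borel_measurable lam" by (rule L1_meas[OF f])
  have hm: "h \<in> borel_measurable lam" by (rule L1_meas[OF h])
  have fhm: "(\<lambda>x. f x + h x) \<in> borel_measurable lam" using fm hm by simp
  let ?I = "\<lambda>u t. \<integral>\<^sup>+s. ennreal (sqrt ((Blk n u t)\<^sup>2 + (Blk m u s)\<^sup>2)) \<partial>lam"
  have 1: "AE t in lam. ?I (\<lambda>x. f x + h x) t = ?I f t + ?I h t"
  proof (rule nn_eq_split)
    show "?I (\<lambda>x. f x + h x) \<in> borel_measurable lam" "?I f \<in> borel_measurable lam" "?I h \<in> borel_measurable lam"
      by (rule meas_inner[OF fhm fhm] meas_inner[OF fm fm] meas_inner[OF hm hm])+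
    show "\<And>t. t \<in> space lam \<Longrightarrow> ?I (\<lambda>x. f x + h x) t \<le> ?I f t + ?I h t" by (rule inner_le[OF f h])
    show "integral\<^sup>N lam (?I (\<lambda>x. f x + h x)) = integral\<^sup>N lam (?I f) + integral\<^sup>N lam (?I h)"
      using eq by (simp add: Dd_def)
    show "integral\<^sup>N lam (?I f) + integral\<^sup>N lam (?I h) \<noteq> \<infinity>"
      using Dd_fin[OF f, of n m] Dd_fin[OF h, of n m] by (simp add: Dd_def)
  qed
  have 2: "AE t in lam. ?I f t \<noteq> \<infinity>"
    by (rule nn_integral_PInf_AE[OF meas_inner[OF fm fm]]) (use Dd_fin[OF f, of n m] in \<open>simp add: Dd_def\<close>)
  have 3: "AE t in lam. ?I h t \<noteq> \<infinity>"
    by (rule nn_integral_PInf_AE[OF meas_inner[OF hm hm]]) (use Dd_fin[OF h, of n m] in \<open>simp add: Dd_def\<close>)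
  show ?thesis using 1 2 3
  proof eventually_elim
    case (elim t)
    have "AE s in lam. ennreal (sqrt ((Blk n (\<lambda>x. f x + h x) t)\<^sup>2 + (Blk m (\<lambda>x. f x + h x) s)\<^sup>2))
        = ennreal (sqrt ((Blk n f t)\<^sup>2 + (Blk m f s)\<^sup>2)) + ennreal (sqrt ((Blk n h t)\<^sup>2 + (Blk m h s)\<^sup>2))"
    proof (rule nn_eq_split)
      show "(\<lambda>s. ennreal (sqrt ((Blk n (\<lambda>x. f x + h x) t)\<^sup>2 + (Blk m (\<lambda>x. f x + h x) s)\<^sup>2))) \<in> borel_measurable lam"
        by (rule meas_s[OF fhm fhm])
      show "(\<lambda>s. ennreal (sqrt ((Blk n f t)\<^sup>2 + (Blk m f s)\<^sup>2))) \<in> borel_measurable lam" by (rule meas_s[OF fm fm])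
      show "(\<lambda>s. ennreal (sqrt ((Blk n h t)\<^sup>2 + (Blk m h s)\<^sup>2))) \<in> borel_measurable lam" by (rule meas_s[OF hm hm])
      fix s
      have "sqrt ((Blk n f t + Blk n h t)\<^sup>2 + (Blk m f s + Blk m h s)\<^sup>2) \<le> sqrt ((Blk n f t)\<^sup>2 + (Blk m f s)\<^sup>2) + sqrt ((Blk n h t)\<^sup>2 + (Blk m h s)\<^sup>2)"
        by (rule real_sqrt_sum_squares_triangle_ineq)
      then show "ennreal (sqrt ((Blk n (\<lambda>x. f x + h x) t)\<^sup>2 + (Blk m (\<lambda>x. f x + h x) s)\<^sup>2)) \<le> ennreal (sqrt ((Blk n f t)\<^sup>2 + (Blk m f s)\<^sup>2)) + ennreal (sqrt ((Blk n h t)\<^sup>2 + (Blk m h s)\<^sup>2))"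
        unfolding Blk_add by (simp add: ennreal_plus[symmetric] del: ennreal_plus)
    next
      show "?I (\<lambda>x. f x + h x) t = ?I f t + ?I h t" by (rule elim(1))
      show "?I f t + ?I h t \<noteq> \<infinity>" using elim(2,3) by simp
    qed
    then show ?case
    proof eventually_elim
      case (elim s)
      then have "sqrt ((Blk n f t + Blk n h t)\<^sup>2 + (Blk m f s + Blk m h s)\<^sup>2) = sqrt ((Blk n f t)\<^sup>2 + (Blk m f s)\<^sup>2) + sqrt ((Blk n h t)\<^sup>2 + (Blk m h s)\<^sup>2)"
        unfolding Blk_add by (simp add: ennreal_plus[symmetric] del: ennreal_plus)
      then have "Blk n f t * Blk m h s = Blk m f s * Blk n h t" by (rule mink_eq)
      then show ?case .
    qed
  qed
qed


context cgrp
begin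

lemma SS_eq_Dd:
  assumes f: "f \<in> L1" and h: "h \<in> L1" and eq: "SS (\<lambda>x. f x + h x) = SS f + SS h"
  shows "Dd (\<lambda>x. f x + h x) n m = Dd f n m + Dd h n m"
proof -
  let ?a = "\<lambda>n. \<integral>\<^sup>+m. ennreal (w n m) * Dd (\<lambda>x. f x + h x) n m \<partial>count_space UNIV"
  let ?b = "\<lambda>n. \<integral>\<^sup>+m. ennreal (w n m) * Dd f n m \<partial>count_space UNIV"
  let ?c = "\<lambda>n. \<integral>\<^sup>+m. ennreal (w n m) * Dd h n m \<partial>count_space UNIV"
  have fin: "SS f + SS h \<noteq> \<infinity>" using SS_fin[OF f] SS_fin[OF h] by (simp add: less_top)
  have le1: "?a n \<le> ?b n + ?c n" for n
  proof -
    have "?a n \<le> (\<integral>\<^sup>+m. (ennreal (w n m) * Dd f n m + ennreal (w n m) * Dd h n m) \<partial>count_space UNIV)"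
    proof (rule nn_integral_mono)
      fix m show "ennreal (w n m) * Dd (\<lambda>x. f x + h x) n m \<le> ennreal (w n m) * Dd f n m + ennreal (w n m) * Dd h n m"
        unfolding distrib_left[symmetric] by (intro mult_left_mono Dd_add[OF f h]) auto
    qed
    also have "\<dots> = ?b n + ?c n" by (rule nn_integral_add) auto
    finally show ?thesis .
  qed
  have "AE n in count_space UNIV. ?a n = ?b n + ?c n"
    by (rule nn_eq_split) (use le1 eq fin in \<open>simp_all add: SS_def\<close>)
  then have A: "?a n = ?b n + ?c n" for n by (simp add: AE_count_space)
  have "AE n in count_space UNIV. ?b n \<noteq> \<infinity>"
    by (rule nn_integral_PInf_AE) (use SS_fin[OF f] in \<open>simp_all add: SS_def\<close>)
  then have B: "?b n \<noteq> \<infinity>" for n by (simp add: AE_count_space)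
  have "AE n in count_space UNIV. ?c n \<noteq> \<infinity>"
    by (rule nn_integral_PInf_AE) (use SS_fin[OF h] in \<open>simp_all add: SS_def\<close>)
  then have C: "?c n \<noteq> \<infinity>" for n by (simp add: AE_count_space)
  have "AE m in count_space UNIV. ennreal (w n m) * Dd (\<lambda>x. f x + h x) n m = ennreal (w n m) * Dd f n m + ennreal (w n m) * Dd h n m"
  proof (rule nn_eq_split)
    fix m show "ennreal (w n m) * Dd (\<lambda>x. f x + h x) n m \<le> ennreal (w n m) * Dd f n m + ennreal (w n m) * Dd h n m"
      unfolding distrib_left[symmetric] by (intro mult_left_mono Dd_add[OF f h]) auto
  qed (use A[of n] B[of n] C[of n] in auto)
  then have "ennreal (w n m) * Dd (\<lambda>x. f x + h x) n m = ennreal (w n m) * (Dd f n m + Dd h n m)"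
    by (simp add: AE_count_space distrib_left)
  then show ?thesis using w_pos[of n m] by (simp add: ennreal_mult_cancel_left)
qed

lemma SC_main:
  assumes f: "f \<in> L1" and h: "h \<in> L1" and eq: "SS (\<lambda>x. f x + h x) = SS f + SS h"
    and nz: "\<not> aeq f (\<lambda>_. 0)"
  shows "\<exists>c. aeq h (\<lambda>x. c * f x)"
proof -
  have R: "AE t in lam. AE s in lam. Blk n f t * Blk m h s = Blk m f s * Blk n h t" for n m
    by (rule Dd_eq_rel[OF f h SS_eq_Dd[OF f h eq]])
  have "\<exists>n0. \<not> (AE t in lam. Blk n0 f t = 0)"
  proof (rule ccontr)
    assume "\<not> (\<exists>n0. \<not> (AE t in lam. Blk n0 f t = 0))"
    then have z: "AE t in lam. Blk n f t = 0" for n by blast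
    have "AE t in lam. f (emb n t) = 0" for n
      using z[of n]
    proof eventually_elim
      case (elim t) then show ?case using LL_pos[of n] by (simp add: Blk_def)
    qed
    then have "AE x in lam. f x = 0" by (rule AE_blocks)
    then show False using nz by (simp add: aeq_def)
  qed
  then obtain n0 where n0: "\<not> (AE t in lam. Blk n0 f t = 0)" by blast
  have AEt: "AE t in lam. \<forall>m. AE s in lam. Blk n0 f t * Blk m h s = Blk m f s * Blk n0 h t"
    by (rule AE_all_countable[THEN iffD2]) (use R in blast)
  have "\<exists>t0. Blk n0 f t0 \<noteq> 0 \<and> (\<forall>m. AE s in lam. Blk n0 f t0 * Blk m h s = Blk m f s * Blk n0 h t0)"
  proof (rule ccontr)
    assume nex: "\<not> (\<exists>t0. Blk n0 f t0 \<noteq> 0 \<and> (\<forall>m. AE s in lam. Blk n0 f t0 * Blk m h s = Blk m f s * Blk n0 h t0))"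
    from AEt have "AE t in lam. Blk n0 f t = 0"
    proof eventually_elim
      case (elim t) then show ?case using nex by blast
    qed
    then show False using n0 by simp
  qed
  then obtain t0 where t0: "Blk n0 f t0 \<noteq> 0" "\<And>m. AE s in lam. Blk n0 f t0 * Blk m h s = Blk m f s * Blk n0 h t0"
    by blast
  define c where "c = Blk n0 h t0 / Blk n0 f t0"
  have "AE s in lam. h (emb m s) = c * f (emb m s)" for m
    using t0(2)[of m]
  proof eventually_elim
    case (elim s)
    then have "Blk m h s = c * Blk m f s" using t0(1) unfolding c_def by (simp add: field_simps)
    then show ?case using LL_pos[of m] by (simp add: Blk_def)
  qed
  then have "AE x in lam. h x = c * f x" by (rule AE_blocks)
  then show ?thesis by (auto simp: aeq_def)
qed

lemma enn2real_SS_add: assumes f: "f \<in> L1" and h: "h \<in> L1"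
  shows "enn2real (SS (\<lambda>x. f x + h x)) \<le> enn2real (SS f) + enn2real (SS h)"
proof -
  have "enn2real (SS (\<lambda>x. f x + h x)) \<le> enn2real (SS f + SS h)"
    using SS_add[OF f h] by (rule enn2real_mono) (use SS_fin[OF f] SS_fin[OF h] in simp)
  also have "\<dots> = enn2real (SS f) + enn2real (SS h)"
    using SS_fin[OF f] SS_fin[OF h] by (intro enn2real_plus) auto
  finally show ?thesis .
qed

lemma Nrm_sc: "strictly_convex_norm Nrm"
  unfolding strictly_convex_norm_def
proof (intro ballI impI, elim conjE)
  fix f h assume f: "f \<in> L1" and h: "h \<in> L1" and ne: "\<not> aeq f h" and eqN: "Nrm f = Nrm h"
  let ?u = "\<lambda>x. f x + h x"
  have u: "?u \<in> L1" by (rule L1_add[OF f h])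
  have mid: "(\<lambda>x. (f x + h x) / 2) = (\<lambda>x. (1/2) * ?u x)" by (rule ext) simp
  have Nmid: "Nrm (\<lambda>x. (f x + h x) / 2) = Nrm ?u / 2" unfolding mid Nrm_scale[OF u] by simp
  have fnz: "\<not> aeq f (\<lambda>_. 0)"
  proof
    assume f0: "aeq f (\<lambda>_. 0)"
    then have "Nrm h = 0" using Nrm_zero[OF f] eqN by simp
    then have "aeq h (\<lambda>_. 0)" using Nrm_zero[OF h] by simp
    then show False using ne f0 by (meson aeq_sym aeq_trans)
  qed
  have Nfpos: "0 < Nrm f" using Nrm_zero[OF f] Nrm_nonneg[of f] fnz by force
  show "Nrm (\<lambda>x. (f x + h x) / 2) < Nrm f"
  proof (cases "Nrm ?u < Nrm f + Nrm h")
    case True then show ?thesis using Nmid eqN by simp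
  next
    case False
    then have equ: "Nrm ?u = Nrm f + Nrm h" using Nrm_add[OF f h] by simp
    have "enn2real (SS ?u) = enn2real (SS f) + enn2real (SS h)"
      using equ l1norm_add[OF f h] enn2real_SS_add[OF f h] unfolding Nrm_def by linarith
    then have "ennreal (enn2real (SS ?u)) = ennreal (enn2real (SS f)) + ennreal (enn2real (SS h))"
      by (simp add: ennreal_plus)
    moreover have "ennreal (enn2real (SS k)) = SS k" if "k \<in> L1" for k
      using SS_fin[OF that] by (simp add: ennreal_enn2real_if)
    ultimately have "SS ?u = SS f + SS h" using f h u by simp
    then obtain c where c: "aeq h (\<lambda>x. c * f x)" using SC_main[OF f h _ fnz] by blast
    have cf: "(\<lambda>x. c * f x) \<in> L1" by (rule L1_scale[OF f])
    have "Nrm h = \<bar>c\<bar> * Nrm f" using Nrm_aeq[OF h cf c] Nrm_scale[OF f] by simp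
    then have "\<bar>c\<bar> = 1" using eqN Nfpos by simp
    then have "c = 1 \<or> c = -1" by linarith
    then show ?thesis
    proof
      assume "c = 1"
      then have "aeq h f" using c by (simp add: aeq_def)
      then show ?thesis using ne by (meson aeq_sym)
    next
      assume "c = -1"
      then have "aeq ?u (\<lambda>_. 0)" using c unfolding aeq_def by (auto elim: AE_mp)
      then have "Nrm ?u = 0" using Nrm_zero[OF u] by simp
      then show ?thesis using Nmid Nfpos by simp
    qed
  qed
qed

end


theorem corollary5p3:
  fixes G :: "('g, 'b) monoid_scheme"
  assumes "group G" and "countable (carrier G)"
  shows "\<exists>T. lattice_isometric_action G T \<and> free_action G T \<and>
            (\<exists>N. equiv_norm N \<and> strictly_convex_norm N \<and> invariant_norm G T N)"
proof -
  interpret cgrp G by (rule cgrp.intro[OF assms])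
  define T where "T g = Tphi (phi g)" for g
  have one: "\<one>\<^bsub>G\<^esub> \<in> carrier G" by simp
  have act: "lattice_isometric_action G T"
    unfolding lattice_isometric_action_def
  proof (intro conjI ballI)
    fix g assume g: "g \<in> carrier G"
    show "lattice_isometry (T g)" unfolding T_def by (rule Tphi_lattice[OF good_phi[OF g]])
  next
    fix f assume f: "f \<in> L1"
    show "aeq (T \<one>\<^bsub>G\<^esub> f) f" unfolding T_def by (rule Tphi_id[OF good_phi[OF one] _ f]) (simp add: phi_one)
  next
    fix g h f assume g: "g \<in> carrier G" and h: "h \<in> carrier G" and f: "f \<in> L1"
    show "aeq (T (g \<otimes>\<^bsub>G\<^esub> h) f) (T g (T h f))" unfolding T_def
      by (rule Tphi_comp[OF good_phi[OF g] good_phi[OF h] good_phi[OF grpG.m_closed[OF g h]] _ f])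
         (simp add: phi_mult[OF g h])
  qed
  have free: "free_action G T"
    unfolding free_action_def
  proof (intro exI[of _ phi] conjI ballI impI)
    fix g assume g: "g \<in> carrier G"
    show "nonsingular_bij (phi g)" by (rule nonsingular[OF good_phi[OF g]])
  next
    fix g f show "aeq (T g f) (Tphi (phi g) f)" by (simp add: T_def aeq_refl)
  next
    fix g assume g: "g \<in> carrier G" and ne: "g \<noteq> \<one>\<^bsub>G\<^esub>"
    show "AE x in lam. phi g x \<noteq> x" by (rule phi_free[OF g ne])
  qed
  have eqn: "equiv_norm Nrm"
    unfolding equiv_norm_def
  proof (intro conjI ballI allI impI)
    fix f h assume "f \<in> L1" "h \<in> L1" "aeq f h" then show "Nrm f = Nrm h" by (rule Nrm_aeq)
  next
    fix f show "0 \<le> Nrm f" by (rule Nrm_nonneg)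
  next
    fix f assume "f \<in> L1" then show "(Nrm f = 0) = aeq f (\<lambda>_. 0)" by (rule Nrm_zero)
  next
    fix f c assume "f \<in> L1" then show "Nrm (\<lambda>x. c * f x) = \<bar>c\<bar> * Nrm f" by (rule Nrm_scale)
  next
    fix f h assume "f \<in> L1" "h \<in> L1" then show "Nrm (\<lambda>x. f x + h x) \<le> Nrm f + Nrm h" by (rule Nrm_add)
  next
    show "\<exists>a b. 0 < a \<and> 0 < b \<and> (\<forall>f\<in>L1. a * l1norm f \<le> Nrm f \<and> Nrm f \<le> b * l1norm f)"
      by (intro exI[of _ 1] exI[of _ 5]) (simp add: Nrm_lower Nrm_upper)
  qed
  have inv: "invariant_norm G T Nrm"
    unfolding invariant_norm_def T_def by (intro ballI Nrm_T)
  show ?thesis using act free eqn Nrm_sc inv by blast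
qed


end
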